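(* Let $G=(V,E)$ be a connected graph with at least two nodes and let $P_{\mathrm{FSTAB}}(G)=\{\bm{x}\in\mathbb{R}^V: x_u+x_v\le 1 \text{ for all } uv\in E,\ \bm{x}\ge\bm{0}\}$, with circuits taken with respect to this linear description. Then $\mathcal{CD}(P_{\mathrm{FSTAB}}(G))=\mathcal{O}(\operatorname{diam}(G))$, i.e. there is an absolute constant $C$ (independent of $G$) with $\mathcal{CD}(P_{\mathrm{FSTAB}}(G))\le C\cdot \operatorname{diam}(G)$.
   Context: $\operatorname{diam}(G)=\max_{v\in V}\varepsilon(v)$, where the eccentricity $\varepsilon(v)$ is the maximum graph distance from $v$ to a node of $G$. Circuits: for a polytope $P=\{\bm{x}: A\bm{x}=\bm{b},\ B\bm{x}\le \bm{d}\}$ given by a fixed linear system, a nonzero vector $\bm{g}$ is a circuit of $P$ if $A\bm{g}=\bm{0}$ and $\operatorname{supp}(B\bm{g})$ is inclusion-minimal among the sets $\operatorname{supp}(B\bm{y})$ with $A\bm{y}=\bm{0}$, $\bm{y}\neq\bm{0}$. A point $\bm{x}''\in P$ is one circuit step from $\bm{x}'\in P$ if $\bm{x}''=\bm{x}'+\alpha\bm{c}$ for a circuit $\bm{c}$ and $\alpha>0$ maximal such that $\bm{x}'+\alpha\bm{c}\in P$. A circuit walk of length $l$ is a sequence $\bm{z}^0,\dots,\bm{z}^l$ in $P$ with each $\bm{z}^i$ one circuit step from $\bm{z}^{i-1}$; the circuit distance is the length of a shortest circuit walk from one point to another, and $\mathcal{CD}(P)$ is the maximum circuit distance over ordered pairs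 of vertices of $P$. *)

theory Defs
  imports Main "HOL-Library.Extended_Nat"
begin

definition graph :: "nat set \<Rightarrow> nat set set \<Rightarrow> bool" where
  "graph V E \<longleftrightarrow> finite V \<and> (\<forall>e\<in>E. e \<subseteq> V \<and> card e = 2)"

definition adj :: "nat set set \<Rightarrow> (nat \<times> nat) set" where
  "adj E = {(u, v). {u, v} \<in> E}"

definition connected_graph :: "nat set \<Rightarrow> nat set set \<Rightarrow> bool" where
  "connected_graph V E \<longleftrightarrow> (\<forall>u\<in>V. \<forall>v\<in>V. (u, v) \<in> (adj E)\<^sup>*)"

definition gdist :: "nat set set \<Rightarrow> nat \<Rightarrow> nat \<Rightarrow> nat" where
  "gdist E u v = (LEAST n. (u, v) \<in> (adj E) ^^ n)"

definition ecc :: "nat set \<Rightarrow> nat set set \<Rightarrow> nat \<Rightarrow> nat" where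
  "ecc V E v = Max ((\<lambda>u. gdist E v u) ` V)"

definition diam :: "nat set \<Rightarrow> nat set set \<Rightarrow> nat" where
  "diam V E = Max (ecc V E ` V)"

text \<open>Points of R^V are functions nat => real vanishing outside V.
  A system is a row index set R with linear row functionals B r and right-hand sides d r;
  there are no equality constraints (A is empty).\<close>

type_synonym vec = "nat \<Rightarrow> real"

definition supported_on :: "nat set \<Rightarrow> vec \<Rightarrow> bool" where
  "supported_on V x \<longleftrightarrow> (\<forall>v. v \<notin> V \<longrightarrow> x v = 0)"

definition polyh :: "nat set \<Rightarrow> 'r set \<Rightarrow> ('r \<Rightarrow> vec \<Rightarrow> real) \<Rightarrow> ('r \<Rightarrow> real) \<Rightarrow> vec set" where
  "polyh V R B d = {x. supported_on V x \<and> (\<forall>r\<in>R. B r x \<le> d r)}"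

definition suppB :: "'r set \<Rightarrow> ('r \<Rightarrow> vec \<Rightarrow> real) \<Rightarrow> vec \<Rightarrow> 'r set" where
  "suppB R B g = {r\<in>R. B r g \<noteq> 0}"

definition is_circuit :: "nat set \<Rightarrow> 'r set \<Rightarrow> ('r \<Rightarrow> vec \<Rightarrow> real) \<Rightarrow> vec \<Rightarrow> bool" where
  "is_circuit V R B g \<longleftrightarrow> supported_on V g \<and> g \<noteq> (\<lambda>_. 0) \<and>
     (\<forall>y. supported_on V y \<and> y \<noteq> (\<lambda>_. 0) \<and> suppB R B y \<subseteq> suppB R B g \<longrightarrow> suppB R B y = suppB R B g)"

definition circuit_step :: "nat set \<Rightarrow> 'r set \<Rightarrow> ('r \<Rightarrow> vec \<Rightarrow> real) \<Rightarrow> ('r \<Rightarrow> real) \<Rightarrow> vec \<Rightarrow> vec \<Rightarrow> bool" where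
  "circuit_step V R B d x x' \<longleftrightarrow> x \<in> polyh V R B d \<and>
     (\<exists>c \<alpha>. is_circuit V R B c \<and> \<alpha> > 0 \<and> x' = (\<lambda>v. x v + \<alpha> * c v) \<and> x' \<in> polyh V R B d \<and>
        (\<forall>\<beta>>\<alpha>. (\<lambda>v. x v + \<beta> * c v) \<notin> polyh V R B d))"

definition circuit_walk :: "nat set \<Rightarrow> 'r set \<Rightarrow> ('r \<Rightarrow> vec \<Rightarrow> real) \<Rightarrow> ('r \<Rightarrow> real) \<Rightarrow> (nat \<Rightarrow> vec) \<Rightarrow> nat \<Rightarrow> bool" where
  "circuit_walk V R B d z l \<longleftrightarrow> (\<forall>i\<le>l. z i \<in> polyh V R B d) \<and>
     (\<forall>i<l. circuit_step V R B d (z i) (z (Suc i)))"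

text \<open>circuit distance (infinity if no circuit walk exists)\<close>
definition circuit_dist :: "nat set \<Rightarrow> 'r set \<Rightarrow> ('r \<Rightarrow> vec \<Rightarrow> real) \<Rightarrow> ('r \<Rightarrow> real) \<Rightarrow> vec \<Rightarrow> vec \<Rightarrow> enat" where
  "circuit_dist V R B d x y =
     (INF l \<in> {l. \<exists>z. circuit_walk V R B d z l \<and> z 0 = x \<and> z l = y}. enat l)"

definition is_vertex :: "vec set \<Rightarrow> vec \<Rightarrow> bool" where
  "is_vertex P x \<longleftrightarrow> x \<in> P \<and>
     (\<forall>y\<in>P. \<forall>z\<in>P. \<forall>t::real. 0 < t \<and> t < 1 \<and> x = (\<lambda>v. t * y v + (1 - t) * z v) \<longrightarrow> y = z)"

definition circuit_diameter :: "nat set \<Rightarrow> 'r set \<Rightarrow> ('r \<Rightarrow> vec \<Rightarrow> real) \<Rightarrow> ('r \<Rightarrow> real) \<Rightarrow> enat" where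
  "circuit_diameter V R B d =
     (SUP p \<in> {p. is_vertex (polyh V R B d) (fst p) \<and> is_vertex (polyh V R B d) (snd p)}.
        circuit_dist V R B d (fst p) (snd p))"

datatype frow = EdgeRow "nat set" | NonnegRow nat

definition fstab_rows :: "nat set \<Rightarrow> nat set set \<Rightarrow> frow set" where
  "fstab_rows V E = EdgeRow ` E \<union> NonnegRow ` V"

fun fstab_B :: "frow \<Rightarrow> vec \<Rightarrow> real" where
  "fstab_B (EdgeRow e) x = sum x e"
| "fstab_B (NonnegRow v) x = - x v"

fun fstab_d :: "frow \<Rightarrow> real" where
  "fstab_d (EdgeRow e) = 1"
| "fstab_d (NonnegRow v) = 0"

definition CD_FSTAB :: "nat set \<Rightarrow> nat set set \<Rightarrow> enat" where
  "CD_FSTAB V E = circuit_diameter V (fstab_rows V E) fstab_B fstab_d"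

end

theory Submission
  imports Defs
begin

locale fg =
  fixes V :: "nat set" and E :: "nat set set" and r :: nat
  assumes gr: "graph V E" and con: "connected_graph V E" and c2: "card V \<ge> 2" and rV: "r \<in> V"
begin

abbreviation "RR \<equiv> fstab_rows V E"
definition "P = polyh V RR fstab_B fstab_d"
definition "lay v = gdist E r v"
definition "D = ecc V E r"
definition "CS = {(x,y). circuit_step V RR fstab_B fstab_d x y}"
definition "R = {(x,y). circuit_step V RR fstab_B fstab_d x y \<and> circuit_step V RR fstab_B fstab_d y x}"

lemma finV: "finite V" using gr unfolding graph_def by auto

lemma edgeV: "{a,b} \<in> E \<Longrightarrow> a \<in> V \<and> b \<in> V \<and> a \<noteq> b"
proof -
  assume e: "{a,b} \<in> E"
  then have "{a,b} \<subseteq> V" "card {a,b} = 2" using gr unfolding graph_def by auto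
  then show ?thesis by (cases "a = b") auto
qed

lemma edge_form: "e \<in> E \<Longrightarrow> \<exists>a b. e = {a,b} \<and> a \<noteq> b"
proof -
  assume "e \<in> E"
  then have "card e = 2" using gr unfolding graph_def by auto
  then show ?thesis by (metis card_2_iff)
qed

lemma lay_path: "v \<in> V \<Longrightarrow> (r, v) \<in> (adj E) ^^ lay v"
proof -
  assume "v \<in> V"
  then have "(r, v) \<in> (adj E)\<^sup>*" using con rV unfolding connected_graph_def by auto
  then obtain n where "(r, v) \<in> (adj E) ^^ n" using rtrancl_power by blast
  then show ?thesis unfolding lay_def gdist_def by (rule LeastI)
qed

lemma lay_le: "(r, v) \<in> (adj E) ^^ n \<Longrightarrow> lay v \<le> n"
  unfolding lay_def gdist_def by (rule Least_le)

lemma lay_r: "lay r = 0"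
  using lay_le[of r 0] by auto

lemma lay0: "v \<in> V \<Longrightarrow> lay v = 0 \<Longrightarrow> v = r"
  using lay_path[of v] by auto

lemma lay_edge: "{a,b} \<in> E \<Longrightarrow> lay b \<le> lay a + 1"
proof -
  assume e: "{a,b} \<in> E"
  then have "a \<in> V" using edgeV by auto
  then have "(r, a) \<in> (adj E) ^^ lay a" by (rule lay_path)
  moreover have "(a, b) \<in> adj E" using e unfolding adj_def by auto
  ultimately have "(r, b) \<in> (adj E) ^^ Suc (lay a)" by (rule relpow_Suc_I)
  then show ?thesis using lay_le by fastforce
qed

lemma lay_edge2: "{a,b} \<in> E \<Longrightarrow> lay a \<le> lay b + 1"
  using lay_edge[of b a] by (simp add: insert_commute)

lemma parent: "v \<in> V \<Longrightarrow> v \<noteq> r \<Longrightarrow> \<exists>w. {w,v} \<in> E \<and> lay w + 1 = lay v"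
proof -
  assume v: "v \<in> V" "v \<noteq> r"
  then have "lay v \<noteq> 0" using lay0 by auto
  then obtain m where m: "lay v = Suc m" by (cases "lay v") auto
  have "(r, v) \<in> (adj E) ^^ Suc m" using lay_path[OF v(1)] m by simp
  then obtain w where w: "(r, w) \<in> (adj E) ^^ m" "(w, v) \<in> adj E" by (rule relpow_Suc_E)
  have e: "{w,v} \<in> E" using w(2) unfolding adj_def by auto
  have "lay w \<le> m" using w(1) lay_le by auto
  moreover have "lay v \<le> lay w + 1" using lay_edge[OF e] .
  ultimately show ?thesis using e m by auto
qed

lemma lay_D: "v \<in> V \<Longrightarrow> lay v \<le> D"
  unfolding D_def ecc_def lay_def using finV by (auto intro: Max_ge)

lemma D_diam: "D \<le> diam V E"
  unfolding D_def diam_def using finV rV by (auto intro: Max_ge)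

lemma layers_exist_aux: "v \<in> V \<Longrightarrow> k \<le> lay v \<Longrightarrow> \<exists>w\<in>V. lay w = k"
proof (induction "lay v - k" arbitrary: v)
  case 0
  then show ?case by (intro bexI[of _ v]) auto
next
  case (Suc n)
  then have "v \<noteq> r" using lay_r by auto
  then obtain w where w: "{w,v} \<in> E" "lay w + 1 = lay v" using parent Suc by blast
  have "w \<in> V" using edgeV w by auto
  then show ?case using Suc w by (intro Suc(1)[of w]) auto
qed

lemma D_attained: "\<exists>v\<in>V. lay v = D"
proof -
  have "V \<noteq> {}" using rV by auto
  then have "D \<in> (\<lambda>u. gdist E r u) ` V" unfolding D_def ecc_def using finV by (intro Max_in) auto
  then show ?thesis unfolding lay_def by auto
qed

lemma layer_ne: "k \<le> D \<Longrightarrow> \<exists>w\<in>V. lay w = k"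
  using D_attained layers_exist_aux by metis

lemma D_pos: "D \<ge> 1"
proof -
  obtain v where "v \<in> V" "v \<noteq> r"
  proof -
    have "\<not> V \<subseteq> {r}" using c2 card_mono[of "{r}" V] by auto
    then show ?thesis using that by auto
  qed
  then have "lay v \<ge> 1" using lay0 by fastforce
  then show ?thesis using lay_D \<open>v \<in> V\<close> by fastforce
qed

end

context fg
begin

lemma sum_edge: "a \<noteq> b \<Longrightarrow> sum x {a,b} = x a + x b" by simp

lemma inP: "x \<in> P \<longleftrightarrow> supported_on V x \<and> (\<forall>v\<in>V. 0 \<le> x v) \<and> (\<forall>a b. {a,b} \<in> E \<longrightarrow> x a + x b \<le> 1)"
proof
  assume "x \<in> P"
  then have s: "supported_on V x" and rows: "\<forall>rw\<in>RR. fstab_B rw x \<le> fstab_d rw"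
    unfolding P_def polyh_def by auto
  have "\<forall>v\<in>V. 0 \<le> x v"
  proof
    fix v assume "v \<in> V"
    then have "NonnegRow v \<in> RR" unfolding fstab_rows_def by auto
    then show "0 \<le> x v" using rows by fastforce
  qed
  moreover have "\<forall>a b. {a,b} \<in> E \<longrightarrow> x a + x b \<le> 1"
  proof (intro allI impI)
    fix a b assume e: "{a,b} \<in> E"
    then have "EdgeRow {a,b} \<in> RR" unfolding fstab_rows_def by auto
    then have "sum x {a,b} \<le> 1" using rows by fastforce
    then show "x a + x b \<le> 1" using edgeV[OF e] by simp
  qed
  ultimately show "supported_on V x \<and> (\<forall>v\<in>V. 0 \<le> x v) \<and> (\<forall>a b. {a,b} \<in> E \<longrightarrow> x a + x b \<le> 1)"
    using s by auto
next
  assume h: "supported_on V x \<and> (\<forall>v\<in>V. 0 \<le> x v) \<and> (\<forall>a b. {a,b} \<in> E \<longrightarrow> x a + x b \<le> 1)"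
  have "\<forall>rw\<in>RR. fstab_B rw x \<le> fstab_d rw"
  proof
    fix rw assume "rw \<in> RR"
    then consider (e) e where "e \<in> E" "rw = EdgeRow e" | (v) v where "v \<in> V" "rw = NonnegRow v"
      unfolding fstab_rows_def by auto
    then show "fstab_B rw x \<le> fstab_d rw"
    proof cases
      case e
      then obtain a b where ab: "e = {a,b}" "a \<noteq> b" using edge_form by blast
      then show ?thesis using e h by auto
    next
      case v
      then show ?thesis using h by auto
    qed
  qed
  then show "x \<in> P" using h unfolding P_def polyh_def by auto
qed

lemma B_scale: "fstab_B rw (\<lambda>v. c * g v) = c * fstab_B rw g"
  by (cases rw) (auto simp: sum_distrib_left)

definition sgn3 :: "(nat \<Rightarrow> real) \<Rightarrow> bool" where "sgn3 \<sigma> \<longleftrightarrow> (\<forall>v. \<sigma> v = 0 \<or> \<sigma> v = 1 \<or> \<sigma> v = -1) \<and> (\<forall>v. \<sigma> v \<noteq> 0 \<longrightarrow> v \<in> V) \<and> \<sigma> r \<noteq> 0 \<and>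
   (\<forall>v. \<sigma> v \<noteq> 0 \<and> v \<noteq> r \<longrightarrow> (\<exists>w. \<sigma> w = - \<sigma> v \<and> {w,v} \<in> E \<and> lay w < lay v))"

lemma sgn3_neg: assumes "sgn3 \<sigma>" shows "sgn3 (\<lambda>v. - \<sigma> v)"
proof -
  have a: "\<forall>v. \<sigma> v = 0 \<or> \<sigma> v = 1 \<or> \<sigma> v = -1" "\<forall>v. \<sigma> v \<noteq> 0 \<longrightarrow> v \<in> V" "\<sigma> r \<noteq> 0"
    "\<forall>v. \<sigma> v \<noteq> 0 \<and> v \<noteq> r \<longrightarrow> (\<exists>w. \<sigma> w = - \<sigma> v \<and> {w,v} \<in> E \<and> lay w < lay v)"
    using assms unfolding sgn3_def by blast+
  have b: "\<forall>v. - \<sigma> v = 0 \<or> - \<sigma> v = 1 \<or> - \<sigma> v = -1" 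
  proof
    fix v show "- \<sigma> v = 0 \<or> - \<sigma> v = 1 \<or> - \<sigma> v = -1" using a(1)[rule_format, of v] by auto
  qed
  have c: "\<forall>v. - \<sigma> v \<noteq> 0 \<and> v \<noteq> r \<longrightarrow> (\<exists>w. - \<sigma> w = - (- \<sigma> v) \<and> {w,v} \<in> E \<and> lay w < lay v)"
    using a(4) by force
  show ?thesis unfolding sgn3_def using a(2,3) b c by simp
qed

lemma circ:
  assumes "sgn3 \<sigma>"
  shows "is_circuit V RR fstab_B \<sigma>"
proof -
  have sig: "\<forall>v. \<sigma> v = 0 \<or> \<sigma> v = 1 \<or> \<sigma> v = -1" and sV: "\<forall>v. \<sigma> v \<noteq> 0 \<longrightarrow> v \<in> V"
    and sr: "\<sigma> r \<noteq> 0"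
    and link: "\<forall>v. \<sigma> v \<noteq> 0 \<and> v \<noteq> r \<longrightarrow> (\<exists>w. \<sigma> w = - \<sigma> v \<and> {w,v} \<in> E \<and> lay w < lay v)"
    using assms unfolding sgn3_def by auto
  have supp: "supported_on V \<sigma>" using sV unfolding supported_on_def by auto
  have nz: "\<sigma> \<noteq> (\<lambda>_. 0)" using sr by (metis)
  have main: "suppB RR fstab_B y = suppB RR fstab_B \<sigma>"
    if y: "supported_on V y" "y \<noteq> (\<lambda>_. 0)" "suppB RR fstab_B y \<subseteq> suppB RR fstab_B \<sigma>" for y
  proof -
    have yS: "\<sigma> v \<noteq> 0" if "y v \<noteq> 0" for v
    proof (cases "v \<in> V")
      case True
      then have "NonnegRow v \<in> RR" unfolding fstab_rows_def by auto
      then have "NonnegRow v \<in> suppB RR fstab_B y" using that unfolding suppB_def by auto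
      then have "NonnegRow v \<in> suppB RR fstab_B \<sigma>" using y(3) by auto
      then show ?thesis unfolding suppB_def by auto
    next
      case False
      then show ?thesis using y(1) that unfolding supported_on_def by auto
    qed
    have cut: "y a + y b = 0" if "{a,b} \<in> E" "\<sigma> a = - \<sigma> b" for a b
    proof -
      have ab: "a \<noteq> b" using edgeV[OF that(1)] by auto
      have "EdgeRow {a,b} \<in> RR" using that unfolding fstab_rows_def by auto
      moreover have "fstab_B (EdgeRow {a,b}) \<sigma> = 0" using ab that(2) by simp
      ultimately have "EdgeRow {a,b} \<notin> suppB RR fstab_B \<sigma>" unfolding suppB_def by auto
      then have "EdgeRow {a,b} \<notin> suppB RR fstab_B y" using y(3) by auto
      then show ?thesis using ab \<open>EdgeRow {a,b} \<in> RR\<close> unfolding suppB_def by auto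
    qed
    have key: "\<forall>v. lay v = n \<and> \<sigma> v \<noteq> 0 \<longrightarrow> y v * \<sigma> v = y r * \<sigma> r" for n
    proof (induction n rule: less_induct)
      case (less n)
      show ?case
      proof (intro allI impI)
        fix v assume v: "lay v = n \<and> \<sigma> v \<noteq> 0"
        show "y v * \<sigma> v = y r * \<sigma> r"
        proof (cases "v = r")
          case True then show ?thesis by simp
        next
          case False
          then obtain w where w: "\<sigma> w = - \<sigma> v" "{w,v} \<in> E" "lay w < lay v" using link v by blast
          have "\<sigma> w \<noteq> 0" using w(1) v by auto
          then have "y w * \<sigma> w = y r * \<sigma> r" using less.IH[of "lay w"] w(3) v by blast
          moreover have "y w + y v = 0" using cut[OF w(2)] w(1) by auto
          ultimately show ?thesis using w(1) by (metis add_eq_0_iff2 minus_mult_minus)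
        qed
      qed
    qed
    define c where "c = y r * \<sigma> r"
    have yc: "y v = c * \<sigma> v" for v
    proof (cases "\<sigma> v = 0")
      case True then show ?thesis using yS by fastforce
    next
      case False
      then have "y v * \<sigma> v = c" using key c_def by auto
      moreover have "\<sigma> v = 1 \<or> \<sigma> v = -1" using sig False by auto
      ultimately show ?thesis by auto
    qed
    then have yeq: "y = (\<lambda>v. c * \<sigma> v)" by auto
    have "c \<noteq> 0" using y(2) yeq by auto
    then show ?thesis unfolding yeq suppB_def B_scale by auto
  qed
  show ?thesis unfolding is_circuit_def
    apply (intro conjI supp nz allI impI)
    using main by blast
qed

lemma toggle:
  assumes xP: "x \<in> P" and sg: "sgn3 \<sigma>" and apos: "\<alpha> > 0"
    and ups0: "\<forall>v. \<sigma> v = 1 \<longrightarrow> x v = 0"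
    and downs: "\<forall>v. \<sigma> v = -1 \<longrightarrow> x v \<ge> \<alpha>"
    and upup: "\<forall>a b. {a,b} \<in> E \<and> \<sigma> a = 1 \<and> \<sigma> b = 1 \<longrightarrow> 2 * \<alpha> \<le> 1"
    and upout: "\<forall>a b. {a,b} \<in> E \<and> \<sigma> a = 1 \<and> \<sigma> b = 0 \<longrightarrow> \<alpha> + x b \<le> 1"
    and maxw: "(\<exists>v. \<sigma> v = -1 \<and> x v = \<alpha>) \<or> (\<exists>a b. {a,b} \<in> E \<and> \<sigma> a + \<sigma> b > 0 \<and> x a + x b + \<alpha> * (\<sigma> a + \<sigma> b) = 1)"
    and revw: "(\<exists>v. \<sigma> v = 1) \<or> (\<exists>a b. {a,b} \<in> E \<and> \<sigma> a + \<sigma> b < 0 \<and> x a + x b = 1)"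
  shows "(x, \<lambda>v. x v + \<alpha> * \<sigma> v) \<in> R"
proof -
  define x' where "x' = (\<lambda>v. x v + \<alpha> * \<sigma> v)"
  have sig: "\<forall>v. \<sigma> v = 0 \<or> \<sigma> v = 1 \<or> \<sigma> v = -1" and sV: "\<forall>v. \<sigma> v \<noteq> 0 \<longrightarrow> v \<in> V"
    using sg unfolding sgn3_def by auto
  have xs: "supported_on V x" "\<forall>v\<in>V. 0 \<le> x v" "\<forall>a b. {a,b} \<in> E \<longrightarrow> x a + x b \<le> 1"
    using xP inP by auto
  have x'P: "x' \<in> P"
    unfolding inP
  proof (intro conjI)
    show "supported_on V x'" using xs(1) sV unfolding supported_on_def x'_def by auto
    show "\<forall>v\<in>V. 0 \<le> x' v"
    proof
      fix v assume v: "v \<in> V"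
      show "0 \<le> x' v" using sig[rule_format, of v] downs ups0 xs(2) v apos unfolding x'_def
        by (auto simp: less_imp_le)
    qed
    show "\<forall>a b. {a,b} \<in> E \<longrightarrow> x' a + x' b \<le> 1"
    proof (intro allI impI)
      fix a b assume e: "{a,b} \<in> E"
      have e': "{b,a} \<in> E" using e by (simp add: insert_commute)
      have le: "x a + x b \<le> 1" using xs(3) e by auto
      have "x a + x b + \<alpha> * (\<sigma> a + \<sigma> b) \<le> 1"
      proof (cases "\<sigma> a + \<sigma> b \<le> 0")
        case True
        then have "\<alpha> * (\<sigma> a + \<sigma> b) \<le> 0" using apos by (simp add: mult_nonneg_nonpos less_imp_le)
        then show ?thesis using le by linarith
      next
        case False
        then consider "\<sigma> a = 1" "\<sigma> b = 1" | "\<sigma> a = 1" "\<sigma> b = 0" | "\<sigma> a = 0" "\<sigma> b = 1"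
          using sig[rule_format, of a] sig[rule_format, of b] by force
        then show ?thesis
        proof cases
          case 1 then show ?thesis using ups0 upup e by auto
        next
          case 2 then show ?thesis using ups0 upout e by (auto simp: add.commute)
        next
          case 3 then show ?thesis using ups0 upout e' by fastforce
        qed
      qed
      then show "x' a + x' b \<le> 1" unfolding x'_def by (simp add: algebra_simps)
    qed
  qed
  have circ1: "is_circuit V RR fstab_B \<sigma>" using circ[OF sg] .
  have circ2: "is_circuit V RR fstab_B (\<lambda>v. - \<sigma> v)" using circ[OF sgn3_neg[OF sg]] .
  have Pp: "P = polyh V RR fstab_B fstab_d" by (rule P_def)
  have nomax: "(\<lambda>v. x v + \<beta> * \<sigma> v) \<notin> P" if b: "\<beta> > \<alpha>" for \<beta>
    using maxw
  proof
    assume "\<exists>v. \<sigma> v = -1 \<and> x v = \<alpha>"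
    then obtain v where v: "\<sigma> v = -1" "x v = \<alpha>" by auto
    then have "v \<in> V" using sV by force
    moreover have "x v + \<beta> * \<sigma> v < 0" using v b by simp
    ultimately show ?thesis unfolding inP by force
  next
    assume "\<exists>a b. {a,b} \<in> E \<and> \<sigma> a + \<sigma> b > 0 \<and> x a + x b + \<alpha> * (\<sigma> a + \<sigma> b) = 1"
    then obtain a b where ab: "{a,b} \<in> E" "\<sigma> a + \<sigma> b > 0" "x a + x b + \<alpha> * (\<sigma> a + \<sigma> b) = 1" by auto
    have "\<alpha> * (\<sigma> a + \<sigma> b) < \<beta> * (\<sigma> a + \<sigma> b)" using ab(2) b by simp
    then have "(x a + \<beta> * \<sigma> a) + (x b + \<beta> * \<sigma> b) > 1" using ab(3) by (simp add: algebra_simps)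
    then show ?thesis unfolding inP using ab(1) by force
  qed
  have nomax2: "(\<lambda>v. x' v + \<beta> * (- \<sigma> v)) \<notin> P" if b: "\<beta> > \<alpha>" for \<beta>
    using revw
  proof
    assume "\<exists>v. \<sigma> v = 1"
    then obtain v where v: "\<sigma> v = 1" by auto
    then have "v \<in> V" "x v = 0" using sV ups0 by force+
    moreover have "x' v + \<beta> * (- \<sigma> v) < 0" using v b \<open>x v = 0\<close> unfolding x'_def by simp
    ultimately show ?thesis unfolding inP by force
  next
    assume "\<exists>a b. {a,b} \<in> E \<and> \<sigma> a + \<sigma> b < 0 \<and> x a + x b = 1"
    then obtain a b where ab: "{a,b} \<in> E" "\<sigma> a + \<sigma> b < 0" "x a + x b = 1" by auto
    have "\<alpha> * (\<sigma> a + \<sigma> b) > \<beta> * (\<sigma> a + \<sigma> b)" using ab(2) b by (simp add: mult_strict_right_mono_neg)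
    then have "(x' a + \<beta> * (- \<sigma> a)) + (x' b + \<beta> * (- \<sigma> b)) > 1" using ab(3) unfolding x'_def
      by (simp add: algebra_simps)
    then show ?thesis unfolding inP using ab(1) by force
  qed
  have s1: "circuit_step V RR fstab_B fstab_d x x'"
    unfolding circuit_step_def Pp[symmetric]
    apply (rule conjI, rule xP)
    apply (rule exI[of _ \<sigma>], rule exI[of _ \<alpha>])
    using circ1 apos x'P nomax by (simp add: x'_def)
  have xx: "x = (\<lambda>v. x' v + \<alpha> * (- \<sigma> v))" unfolding x'_def by auto
  have s2: "circuit_step V RR fstab_B fstab_d x' x"
    unfolding circuit_step_def Pp[symmetric]
    apply (rule conjI, rule x'P)
    apply (rule exI[of _ "\<lambda>v. - \<sigma> v"], rule exI[of _ \<alpha>])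
    using circ2 apos xP nomax2 xx by simp
  show ?thesis using s1 s2 unfolding R_def x'_def by auto
qed

end

context fg
begin

definition hi :: "(nat \<Rightarrow> real) \<Rightarrow> bool" where "hi x \<longleftrightarrow> (\<forall>v. x v = 0 \<or> x v = 1/2 \<or> x v = 1)"
definition o1 :: "(nat \<Rightarrow> real) \<Rightarrow> bool" where "o1 x \<longleftrightarrow> (\<forall>v. x v = 0 \<or> x v = 1)"
definition ev :: "nat \<Rightarrow> nat \<Rightarrow> bool" where "ev k v \<longleftrightarrow> even (k - lay v)"

definition sA :: "nat \<Rightarrow> nat set \<Rightarrow> nat set \<Rightarrow> nat \<Rightarrow> real" where
  "sA k U Y v = (if v \<in> V \<and> lay v \<le> k then (if ev k v then -1 else 1) else if v \<in> U then 1 else if v \<in> Y then -1 else 0)"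

lemma P_nonneg: "x \<in> P \<Longrightarrow> v \<in> V \<Longrightarrow> 0 \<le> x v" using inP by auto
lemma P_edge: "x \<in> P \<Longrightarrow> {a,b} \<in> E \<Longrightarrow> x a + x b \<le> 1" using inP by auto
lemma P_out: "x \<in> P \<Longrightarrow> v \<notin> V \<Longrightarrow> x v = 0" using inP unfolding supported_on_def by auto

lemma par: "v \<in> V \<Longrightarrow> v \<noteq> r \<Longrightarrow> \<exists>w\<in>V. {w,v} \<in> E \<and> lay w + 1 = lay v"
  using parent edgeV by blast

lemma ev_Suc: "lay v \<le> k \<Longrightarrow> ev (Suc k) v \<longleftrightarrow> \<not> ev k v"
  unfolding ev_def by (simp add: Suc_diff_le)

lemma ev_self: "lay v = k \<Longrightarrow> ev k v" unfolding ev_def by simp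

lemma ev_par: "lay w + 1 = lay v \<Longrightarrow> lay v \<le> k \<Longrightarrow> ev k w \<longleftrightarrow> \<not> ev k v"
  unfolding ev_def by (metis Suc_diff_le Suc_eq_plus1 diff_Suc_Suc even_Suc le_imp_less_Suc less_eq_Suc_le Nat.diff_diff_right diff_le_self)

lemma R_P: "(x,y) \<in> R \<Longrightarrow> x \<in> P \<and> y \<in> P"
  unfolding R_def circuit_step_def P_def by auto

lemma sgnA:
  assumes U: "\<forall>u\<in>U. u \<in> V \<and> lay u = Suc k"
    and Y: "\<forall>y\<in>Y. y \<in> V \<and> lay y > Suc k \<and> (\<exists>u\<in>U. {u,y} \<in> E)"
  shows "sgn3 (sA k U Y)"
proof -
  have vals: "\<forall>v. sA k U Y v = 0 \<or> sA k U Y v = 1 \<or> sA k U Y v = -1" unfolding sA_def by auto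
  have inV: "\<forall>v. sA k U Y v \<noteq> 0 \<longrightarrow> v \<in> V" unfolding sA_def using U Y by auto
  have sr: "sA k U Y r \<noteq> 0" unfolding sA_def using rV lay_r by auto
  have link: "\<exists>w. sA k U Y w = - sA k U Y v \<and> {w,v} \<in> E \<and> lay w < lay v"
    if v: "sA k U Y v \<noteq> 0" "v \<noteq> r" for v
  proof (cases "v \<in> V \<and> lay v \<le> k")
    case True
    then obtain w where w: "w \<in> V" "{w,v} \<in> E" "lay w + 1 = lay v" using par v True by blast
    have "ev k w \<longleftrightarrow> \<not> ev k v" using ev_par[OF w(3)] True by auto
    then have "sA k U Y w = - sA k U Y v" unfolding sA_def using True w by auto
    then show ?thesis using w by auto
  next
    case False
    show ?thesis
    proof (cases "v \<in> U")
      case True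
      then have vv: "v \<in> V" "lay v = Suc k" using U by auto
      then obtain w where w: "w \<in> V" "{w,v} \<in> E" "lay w + 1 = lay v" using par v by blast
      have "lay w = k" using w vv by auto
      then have "sA k U Y w = -1" unfolding sA_def using w ev_self[of w k] by auto
      moreover have "sA k U Y v = 1" unfolding sA_def using True False by auto
      ultimately show ?thesis using w by auto
    next
      case F2: False
      then have "v \<in> Y" using v False unfolding sA_def by (auto split: if_splits)
      then obtain u where u: "u \<in> U" "{u,v} \<in> E" and ly: "lay v > Suc k" using Y by auto
      have uu: "u \<in> V" "lay u = Suc k" using U u by auto
      have "sA k U Y u = 1" unfolding sA_def using uu u by auto
      moreover have "sA k U Y v = -1" unfolding sA_def using F2 False \<open>v \<in> Y\<close> by auto
      ultimately show ?thesis using u uu ly by auto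
    qed
  qed
  show ?thesis unfolding sgn3_def using vals inV sr link by blast
qed

lemma hi_half:
  assumes "hi x" "\<forall>v. \<sigma> v = 0 \<or> \<sigma> v = 1 \<or> \<sigma> v = -1" "\<forall>v. \<sigma> v = 1 \<longrightarrow> x v = 0" "\<forall>v. \<sigma> v = -1 \<longrightarrow> x v \<ge> 1/2"
  shows "hi (\<lambda>v. x v + 1/2 * \<sigma> v)"
  unfolding hi_def
proof
  fix v
  have "x v = 0 \<or> x v = 1/2 \<or> x v = 1" using assms(1) unfolding hi_def by auto
  then show "x v + 1/2 * \<sigma> v = 0 \<or> x v + 1/2 * \<sigma> v = 1/2 \<or> x v + 1/2 * \<sigma> v = 1"
    using assms(2-4)[rule_format, of v] by auto
qed

lemma hi_le1: assumes "hi x" shows "x v \<le> 1"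
proof -
  have "x v = 0 \<or> x v = 1/2 \<or> x v = 1" using assms unfolding hi_def by blast
  then show ?thesis by auto
qed

definition HA :: "nat \<Rightarrow> (nat \<Rightarrow> real) \<Rightarrow> bool" where
  "HA k x \<longleftrightarrow> x \<in> P \<and> hi x \<and> (\<forall>v\<in>V. lay v \<le> k \<longrightarrow> x v = (if ev k v then 1/2 else 0))"

lemma HA_step:
  assumes H: "HA k x" and k: "k < D"
  shows "\<exists>x'. (x,x') \<in> R \<and> HA (Suc k) x'"
proof -
  have xP: "x \<in> P" and xh: "hi x" and pat: "\<And>v. v \<in> V \<Longrightarrow> lay v \<le> k \<Longrightarrow> x v = (if ev k v then 1/2 else 0)"
    using H unfolding HA_def by auto
  have xv: "x v = 0 \<or> x v = 1/2 \<or> x v = 1" for v using xh unfolding hi_def by auto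
  have next_le: "x v \<le> 1/2" if vv: "v \<in> V" "lay v = Suc k" for v
  proof -
    have "v \<noteq> r" using vv lay_r by auto
    then obtain w where w: "w \<in> V" "{w,v} \<in> E" "lay w + 1 = lay v" using par vv by blast
    have "lay w = k" using w(3) vv by auto
    then have "x w = 1/2" using pat[OF w(1)] ev_self[of w k] by auto
    then show ?thesis using P_edge[OF xP w(2)] by auto
  qed
  define U where "U = {v\<in>V. lay v = Suc k \<and> x v = 0}"
  define Y where "Y = {w\<in>V. x w = 1 \<and> (\<exists>u\<in>U. {u,w} \<in> E)}"
  have Ulay: "\<forall>u\<in>U. u \<in> V \<and> lay u = Suc k" unfolding U_def by auto
  have Ylay: "\<forall>y\<in>Y. y \<in> V \<and> lay y > Suc k \<and> (\<exists>u\<in>U. {u,y} \<in> E)"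
  proof
    fix y assume y: "y \<in> Y"
    then have yV: "y \<in> V" and y1: "x y = 1" and yu: "\<exists>u\<in>U. {u,y} \<in> E" unfolding Y_def by auto
    have "\<not> lay y \<le> k" using pat[OF yV] y1 by (auto split: if_splits)
    moreover have "lay y \<noteq> Suc k" using next_le[OF yV] y1 by auto
    ultimately show "y \<in> V \<and> lay y > Suc k \<and> (\<exists>u\<in>U. {u,y} \<in> E)" using yV yu by auto
  qed
  define \<sigma> where "\<sigma> = sA k U Y"
  have sg: "sgn3 \<sigma>" unfolding \<sigma>_def using sgnA[OF Ulay Ylay] .
  have vals: "\<forall>v. \<sigma> v = 0 \<or> \<sigma> v = 1 \<or> \<sigma> v = -1" using sg unfolding sgn3_def by auto
  have sig_up: "x v = 0" if "\<sigma> v = 1" for v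
  proof (cases "v \<in> V \<and> lay v \<le> k")
    case True then show ?thesis using that pat unfolding \<sigma>_def sA_def by (auto split: if_splits)
  next
    case False then show ?thesis using that unfolding \<sigma>_def sA_def U_def by (auto split: if_splits)
  qed
  have sig_down: "x v \<ge> 1/2" if "\<sigma> v = -1" for v
  proof (cases "v \<in> V \<and> lay v \<le> k")
    case True then show ?thesis using that pat unfolding \<sigma>_def sA_def by (auto split: if_splits)
  next
    case False then show ?thesis using that unfolding \<sigma>_def sA_def Y_def by (auto split: if_splits)
  qed
  have upout: "1/2 + x b \<le> 1" if ab: "{a,b} \<in> E" "\<sigma> a = 1" "\<sigma> b = 0" for a b
  proof -
    have aV: "a \<in> V" and bV: "b \<in> V" using edgeV[OF ab(1)] by auto
    show ?thesis
    proof (cases "lay a \<le> k")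
      case True
      then have "\<not> ev k a" using ab(2) aV unfolding \<sigma>_def sA_def by (auto split: if_splits)
      then have "lay a < k" using True ev_self[of a k] by (metis le_neq_implies_less)
      then have "lay b \<le> k" using lay_edge[OF ab(1)] by auto
      then have "\<sigma> b \<noteq> 0" using bV unfolding \<sigma>_def sA_def by auto
      then show ?thesis using ab by auto
    next
      case False
      then have "a \<in> U" using ab(2) aV unfolding \<sigma>_def sA_def by (auto split: if_splits)
      then have "b \<notin> Y" using ab(3) bV unfolding \<sigma>_def sA_def by (auto split: if_splits)
      then have "x b \<noteq> 1" using \<open>a \<in> U\<close> ab(1) bV unfolding Y_def by auto
      then show ?thesis using xv[of b] by auto
    qed
  qed
  obtain p where p: "p \<in> V" "lay p = k" using layer_ne[of k] k by auto
  have maxw: "\<sigma> p = -1 \<and> x p = 1/2" using p pat[OF p(1)] ev_self[OF p(2)] unfolding \<sigma>_def sA_def by auto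
  have revw: "(\<exists>v. \<sigma> v = 1) \<or> (\<exists>a b. {a,b} \<in> E \<and> \<sigma> a + \<sigma> b < 0 \<and> x a + x b = 1)"
  proof (cases "k = 0")
    case False
    have "k - 1 \<le> D" using k by simp
    then obtain q where q: "q \<in> V" "lay q = k - 1" using layer_ne[of "k - 1"] by blast
    have "k - lay q = 1" using q False by simp
    then have "\<not> ev k q" unfolding ev_def by simp
    then have "\<sigma> q = 1" using q unfolding \<sigma>_def sA_def by auto
    then show ?thesis by auto
  next
    case True
    show ?thesis
    proof (cases "U = {}")
      case False
      then obtain u where "u \<in> U" by auto
      then have "\<sigma> u = 1" using Ulay True unfolding \<sigma>_def sA_def by auto
      then show ?thesis by auto
    next
      case Ue: True
      obtain b where b: "b \<in> V" "lay b = 1" using layer_ne[of 1] D_pos by auto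
      have "b \<noteq> r" using b lay_r by auto
      then obtain w where w: "w \<in> V" "{w,b} \<in> E" "lay w + 1 = lay b" using par b by blast
      have "w = r" using lay0 w b by auto
      have xb: "x b = 1/2" using next_le[OF b(1)] b True Ue xv[of b] unfolding U_def by auto
      have xr: "x r = 1/2" using pat[OF rV] lay_r ev_self[OF lay_r] True by auto
      have sr: "\<sigma> r = -1" using rV lay_r ev_self[OF lay_r] True unfolding \<sigma>_def sA_def by auto
      have sb: "\<sigma> b = 0" using b True Ue xb unfolding \<sigma>_def sA_def Y_def by auto
      show ?thesis using w(2) \<open>w = r\<close> xr xb sr sb by (intro disjI2 exI[of _ r] exI[of _ b]) auto
    qed
  qed
  define x' where "x' = (\<lambda>v. x v + 1/2 * \<sigma> v)"
  have st: "(x, x') \<in> R" unfolding x'_def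
  proof (rule toggle[OF xP sg])
    show "(0::real) < 1/2" by simp
    show "\<forall>v. \<sigma> v = 1 \<longrightarrow> x v = 0" using sig_up by blast
    show "\<forall>v. \<sigma> v = -1 \<longrightarrow> x v \<ge> 1/2" using sig_down by blast
    show "\<forall>a b. {a,b} \<in> E \<and> \<sigma> a = 1 \<and> \<sigma> b = 1 \<longrightarrow> 2 * (1/2::real) \<le> 1" by simp
    show "\<forall>a b. {a,b} \<in> E \<and> \<sigma> a = 1 \<and> \<sigma> b = 0 \<longrightarrow> 1/2 + x b \<le> 1" using upout by blast
    show "(\<exists>v. \<sigma> v = -1 \<and> x v = 1/2) \<or> (\<exists>a b. {a,b} \<in> E \<and> \<sigma> a + \<sigma> b > 0 \<and> x a + x b + 1/2 * (\<sigma> a + \<sigma> b) = 1)"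
      using maxw by blast
    show "(\<exists>v. \<sigma> v = 1) \<or> (\<exists>a b. {a,b} \<in> E \<and> \<sigma> a + \<sigma> b < 0 \<and> x a + x b = 1)" using revw .
  qed
  have x'P: "x' \<in> P" using R_P[OF st] by auto
  have x'h: "hi x'" unfolding x'_def using hi_half[OF xh vals] sig_up sig_down by auto
  have pat': "x' v = (if ev (Suc k) v then 1/2 else 0)" if v: "v \<in> V" "lay v \<le> Suc k" for v
  proof (cases "lay v \<le> k")
    case True
    then show ?thesis using pat[OF v(1) True] ev_Suc[OF True] v unfolding x'_def \<sigma>_def sA_def by auto
  next
    case False
    then have lv: "lay v = Suc k" using v by auto
    have ev': "ev (Suc k) v" using ev_self[OF lv] .
    show ?thesis
    proof (cases "x v = 0")
      case True
      then have "v \<in> U" unfolding U_def using v lv by auto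
      then show ?thesis using True ev' False unfolding x'_def \<sigma>_def sA_def by auto
    next
      case F2: False
      then have "x v = 1/2" using next_le[OF v(1) lv] xv[of v] by auto
      moreover have "v \<notin> U" "v \<notin> Y" using F2 \<open>x v = 1/2\<close> unfolding U_def Y_def by auto
      ultimately show ?thesis using ev' False unfolding x'_def \<sigma>_def sA_def by auto
    qed
  qed
  show ?thesis using st x'P x'h pat' unfolding HA_def by blast
qed

end

context fg
begin

lemma toggle2:
  assumes "x \<in> P" "sgn3 \<sigma>" "\<alpha> > 0"
    and u0: "\<And>v. \<sigma> v = 1 \<Longrightarrow> x v = 0"
    and dn: "\<And>v. \<sigma> v = -1 \<Longrightarrow> x v \<ge> \<alpha>"
    and uu: "\<And>a b. {a,b} \<in> E \<Longrightarrow> \<sigma> a = 1 \<Longrightarrow> \<sigma> b = 1 \<Longrightarrow> 2 * \<alpha> \<le> 1"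
    and uo: "\<And>a b. {a,b} \<in> E \<Longrightarrow> \<sigma> a = 1 \<Longrightarrow> \<sigma> b = 0 \<Longrightarrow> \<alpha> + x b \<le> 1"
    and mw: "(\<exists>v. \<sigma> v = -1 \<and> x v = \<alpha>) \<or> (\<exists>a b. {a,b} \<in> E \<and> \<sigma> a + \<sigma> b > 0 \<and> x a + x b + \<alpha> * (\<sigma> a + \<sigma> b) = 1)"
    and rw: "(\<exists>v. \<sigma> v = 1) \<or> (\<exists>a b. {a,b} \<in> E \<and> \<sigma> a + \<sigma> b < 0 \<and> x a + x b = 1)"
  shows "(x, \<lambda>v. x v + \<alpha> * \<sigma> v) \<in> R"
proof (rule toggle[OF assms(1,2,3)])
  show "\<forall>v. \<sigma> v = 1 \<longrightarrow> x v = 0" using u0 by blast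
  show "\<forall>v. \<sigma> v = -1 \<longrightarrow> x v \<ge> \<alpha>" using dn by blast
  show "\<forall>a b. {a,b} \<in> E \<and> \<sigma> a = 1 \<and> \<sigma> b = 1 \<longrightarrow> 2 * \<alpha> \<le> 1" using uu by blast
  show "\<forall>a b. {a,b} \<in> E \<and> \<sigma> a = 1 \<and> \<sigma> b = 0 \<longrightarrow> \<alpha> + x b \<le> 1" using uo by blast
qed (fact mw, fact rw)

lemma sA_in: "v \<in> V \<Longrightarrow> lay v \<le> k \<Longrightarrow> sA k U Y v = (if ev k v then -1 else 1)"
  unfolding sA_def by auto
lemma sA_out: "\<not> (v \<in> V \<and> lay v \<le> k) \<Longrightarrow> sA k U Y v = (if v \<in> U then 1 else if v \<in> Y then -1 else 0)"
  unfolding sA_def by auto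

lemma ev_pred: "lay v \<le> k - 1 \<Longrightarrow> 1 \<le> k \<Longrightarrow> ev (k - 1) v \<longleftrightarrow> \<not> ev k v"
  using ev_Suc[of v "k - 1"] by simp

lemma ev_notk: "lay v \<le> k \<Longrightarrow> \<not> ev k v \<Longrightarrow> lay v < k"
  using ev_self[of v k] by (cases "lay v = k") auto

lemma lay_lt_nb: "{a,b} \<in> E \<Longrightarrow> lay a < k \<Longrightarrow> lay b \<le> k"
  using lay_edge[of a b] by auto

definition Qh :: "nat \<Rightarrow> nat \<Rightarrow> real" where "Qh k v = (if v \<in> V \<and> lay v \<le> k \<and> ev k v then 1/2 else 0)"
definition Q1 :: "nat \<Rightarrow> nat \<Rightarrow> real" where "Q1 k v = (if v \<in> V \<and> lay v \<le> k \<and> ev k v then 1 else 0)"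

lemma Qh_P: "Qh k \<in> P"
  unfolding inP
proof (intro conjI)
  show "supported_on V (Qh k)" unfolding supported_on_def Qh_def by auto
  show "\<forall>v\<in>V. 0 \<le> Qh k v" unfolding Qh_def by auto
  show "\<forall>a b. {a, b} \<in> E \<longrightarrow> Qh k a + Qh k b \<le> 1" unfolding Qh_def by auto
qed

lemma HA_D: assumes "HA D x" shows "x = Qh D"
proof
  fix v
  have xP: "x \<in> P" using assms unfolding HA_def by auto
  show "x v = Qh D v"
  proof (cases "v \<in> V")
    case True
    then show ?thesis using assms lay_D[OF True] unfolding HA_def Qh_def by auto
  next
    case False
    then show ?thesis using P_out[OF xP False] unfolding Qh_def by auto
  qed
qed

lemma HA_reach: "HA k x \<Longrightarrow> k \<le> D \<Longrightarrow> (x, Qh D) \<in> R ^^ (D - k)"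
proof (induction "D - k" arbitrary: k x)
  case 0
  then have "k = D" by auto
  then show ?case using HA_D 0 by auto
next
  case (Suc n)
  then have k: "k < D" by auto
  obtain x' where x': "(x,x') \<in> R" "HA (Suc k) x'" using HA_step[OF Suc(3) k] by blast
  have "(x', Qh D) \<in> R ^^ (D - Suc k)" using Suc(1)[of "Suc k" x'] Suc(2) x'(2) k by auto
  moreover have "D - k = Suc (D - Suc k)" using k by auto
  ultimately show ?case using x'(1) relpow_Suc_I2 by metis
qed

lemma CA_step: assumes k: "1 \<le> k" "k \<le> D" shows "(Qh k, Qh (k - 1)) \<in> R"
proof -
  define \<sigma> where "\<sigma> = sA k {} {}"
  have sg: "sgn3 \<sigma>" unfolding \<sigma>_def by (rule sgnA) auto
  have s_in: "\<sigma> v = (if ev k v then -1 else 1)" if "v \<in> V" "lay v \<le> k" for v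
    using sA_in[OF that] unfolding \<sigma>_def .
  have s_out: "\<sigma> v = 0" if "\<not> (v \<in> V \<and> lay v \<le> k)" for v
    using sA_out[OF that] unfolding \<sigma>_def by simp
  have st: "(Qh k, \<lambda>v. Qh k v + 1/2 * \<sigma> v) \<in> R"
  proof (rule toggle2[OF Qh_P sg])
    show "(0::real) < 1/2" by simp
    show "Qh k v = 0" if "\<sigma> v = 1" for v
      using that s_in s_out unfolding Qh_def by (cases "v \<in> V \<and> lay v \<le> k") (auto split: if_splits)
    show "Qh k v \<ge> 1/2" if "\<sigma> v = -1" for v
      using that s_in s_out unfolding Qh_def by (cases "v \<in> V \<and> lay v \<le> k") (auto split: if_splits)
    show "2 * (1/2::real) \<le> 1" by simp
    show "1/2 + Qh k b \<le> 1" for b unfolding Qh_def by auto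
    obtain p where p: "p \<in> V" "lay p = k" using layer_ne[of k] k by auto
    have "\<sigma> p = -1" "Qh k p = 1/2" using s_in[of p] p ev_self[OF p(2)] unfolding Qh_def by auto
    then show "(\<exists>v. \<sigma> v = -1 \<and> Qh k v = 1/2) \<or> (\<exists>a b. {a,b} \<in> E \<and> \<sigma> a + \<sigma> b > 0 \<and> Qh k a + Qh k b + 1/2 * (\<sigma> a + \<sigma> b) = 1)"
      by blast
    have "k - 1 \<le> D" using k by simp
    then obtain q where q: "q \<in> V" "lay q = k - 1" using layer_ne[of "k - 1"] by blast
    have "k - lay q = 1" using q k by simp
    then have "\<not> ev k q" unfolding ev_def by simp
    then have "\<sigma> q = 1" using s_in[of q] q k by auto
    then show "(\<exists>v. \<sigma> v = 1) \<or> (\<exists>a b. {a,b} \<in> E \<and> \<sigma> a + \<sigma> b < 0 \<and> Qh k a + Qh k b = 1)" by blast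
  qed
  have "(\<lambda>v. Qh k v + 1/2 * \<sigma> v) = Qh (k - 1)"
  proof
    fix v
    show "Qh k v + 1/2 * \<sigma> v = Qh (k - 1) v"
    proof (cases "v \<in> V \<and> lay v \<le> k")
      case True
      show ?thesis
      proof (cases "ev k v")
        case True2: True
        have "\<not> (lay v \<le> k - 1 \<and> ev (k - 1) v)" using ev_pred[of v k] k True2 by auto
        then show ?thesis using True True2 s_in[of v] unfolding Qh_def by auto
      next
        case False
        have "lay v \<le> k - 1" using ev_notk[of v k] True False by auto
        then have "ev (k - 1) v" using ev_pred[of v k] k False by auto
        then show ?thesis using True False s_in[of v] \<open>lay v \<le> k - 1\<close> unfolding Qh_def by auto
      qed
    next
      case False
      then show ?thesis using s_out[OF False] unfolding Qh_def by auto
    qed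
  qed
  then show ?thesis using st by simp
qed

lemma CA_chain: "k \<le> D \<Longrightarrow> (Qh k, Qh 0) \<in> R ^^ k"
proof (induction k)
  case 0 then show ?case by simp
next
  case (Suc k)
  have "(Qh (Suc k), Qh k) \<in> R" using CA_step[of "Suc k"] Suc(2) by simp
  then show ?case using Suc relpow_Suc_I2 by (metis Suc_leD)
qed

lemma rp_trans: "(a,b) \<in> R ^^ m \<Longrightarrow> (b,c) \<in> R ^^ n \<Longrightarrow> (a,c) \<in> R ^^ (m + n)"
  unfolding relpow_add by (rule relcompI)

definition "wthn x h n \<longleftrightarrow> (\<exists>m\<le>n. (x, h) \<in> R ^^ m)"

lemma wthn_mono: "wthn x h n \<Longrightarrow> n \<le> n' \<Longrightarrow> wthn x h n'"
  unfolding wthn_def by (meson order_trans)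

lemma wthn_step: "(x, y) \<in> R \<Longrightarrow> wthn y h n \<Longrightarrow> wthn x h (Suc n)"
  unfolding wthn_def by (meson Suc_le_mono relpow_Suc_I2)

lemma HA_hub: "HA k x \<Longrightarrow> k \<le> D \<Longrightarrow> wthn x (Qh 0) (2 * D)"
proof -
  assume a: "HA k x" "k \<le> D"
  have "(x, Qh D) \<in> R ^^ (D - k)" using HA_reach a by auto
  moreover have "(Qh D, Qh 0) \<in> R ^^ D" using CA_chain by auto
  ultimately have "(x, Qh 0) \<in> R ^^ (D - k + D)" by (rule rp_trans)
  then show ?thesis unfolding wthn_def by (intro exI[of _ "D - k + D"]) auto
qed

end

context fg
begin

definition "Bip \<longleftrightarrow> (\<forall>a b. {a,b} \<in> E \<longrightarrow> lay a \<noteq> lay b)"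

lemma bip_par: assumes "Bip" "{a,b} \<in> E" "even (lay a + c)" "even (lay b + c)" shows False
proof -
  have "lay a \<noteq> lay b" using assms(1,2) unfolding Bip_def by auto
  moreover have "lay b \<le> lay a + 1" "lay a \<le> lay b + 1" using lay_edge[OF assms(2)] lay_edge2[OF assms(2)] by auto
  ultimately have "lay b = lay a + 1 \<or> lay a = lay b + 1" by auto
  then show False using assms(3,4) by auto
qed

lemma up_par: "lay a \<le> k \<Longrightarrow> \<not> ev k a \<Longrightarrow> even (lay a + Suc k)"
  unfolding ev_def by (metis add.commute dvd_diff_nat even_Suc le_add_diff_inverse2 odd_add)

lemma ev_par2: "lay a \<le> k \<Longrightarrow> ev k a \<Longrightarrow> even (lay a + k)"
  unfolding ev_def by (metis add.commute dvd_add le_add_diff_inverse2 even_add)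

lemma hi_full:
  assumes "hi x" "\<forall>v. \<sigma> v = 0 \<or> \<sigma> v = 1 \<or> \<sigma> v = -1" "\<And>v. \<sigma> v = 1 \<Longrightarrow> x v = 0" "\<And>v. \<sigma> v = -1 \<Longrightarrow> x v = 1"
  shows "hi (\<lambda>v. x v + 1 * \<sigma> v)"
  unfolding hi_def
proof
  fix v
  have "x v = 0 \<or> x v = 1/2 \<or> x v = 1" using assms(1) unfolding hi_def by auto
  then show "x v + 1 * \<sigma> v = 0 \<or> x v + 1 * \<sigma> v = 1/2 \<or> x v + 1 * \<sigma> v = 1"
    using assms(2)[rule_format, of v] assms(3,4)[of v] by auto
qed

lemma o1_full:
  assumes "o1 x" "\<forall>v. \<sigma> v = 0 \<or> \<sigma> v = 1 \<or> \<sigma> v = -1" "\<And>v. \<sigma> v = 1 \<Longrightarrow> x v = 0" "\<And>v. \<sigma> v = -1 \<Longrightarrow> x v = 1"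
  shows "o1 (\<lambda>v. x v + 1 * \<sigma> v)"
  unfolding o1_def
proof
  fix v
  have "x v = 0 \<or> x v = 1" using assms(1) unfolding o1_def by auto
  then show "x v + 1 * \<sigma> v = 0 \<or> x v + 1 * \<sigma> v = 1"
    using assms(2)[rule_format, of v] assms(3,4)[of v] by auto
qed

lemma o1_hi: "o1 x \<Longrightarrow> hi x" unfolding o1_def hi_def by auto

lemma C1_reach: "Q1 k \<in> P \<Longrightarrow> k \<le> D \<Longrightarrow> wthn (Q1 k) (Q1 0) (k + 2 * D) \<or> (wthn (Q1 k) (Qh 0) (k + 2 * D) \<and> \<not> Bip)"
proof (induction k)
  case 0
  then show ?case unfolding wthn_def by (intro disjI1 exI[of _ 0]) auto
next
  case (Suc k)
  define x where "x = Q1 (Suc k)"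
  have xP: "x \<in> P" using Suc x_def by auto
  define \<sigma> where "\<sigma> = sA (Suc k) {} {}"
  have sg: "sgn3 \<sigma>" unfolding \<sigma>_def by (rule sgnA) auto
  have vals: "\<forall>v. \<sigma> v = 0 \<or> \<sigma> v = 1 \<or> \<sigma> v = -1" using sg unfolding sgn3_def by auto
  have s_in: "\<sigma> v = (if ev (Suc k) v then -1 else 1)" if "v \<in> V" "lay v \<le> Suc k" for v
    using sA_in[OF that] unfolding \<sigma>_def .
  have s_out: "\<sigma> v = 0" if "\<not> (v \<in> V \<and> lay v \<le> Suc k)" for v
    using sA_out[OF that] unfolding \<sigma>_def by simp
  have up: "x v = 0 \<and> v \<in> V \<and> lay v < Suc k \<and> \<not> ev (Suc k) v" if "\<sigma> v = 1" for v
  proof -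
    have "v \<in> V \<and> lay v \<le> Suc k" using that s_out by fastforce
    then show ?thesis using that s_in[of v] ev_notk[of v "Suc k"] unfolding x_def Q1_def by (auto split: if_splits)
  qed
  have dn: "x v = 1" if "\<sigma> v = -1" for v
  proof -
    have "v \<in> V \<and> lay v \<le> Suc k" using that s_out by fastforce
    then show ?thesis using that s_in[of v] unfolding x_def Q1_def by (auto split: if_splits)
  qed
  have uo: "False" if "{a,b} \<in> E" "\<sigma> a = 1" "\<sigma> b = 0" for a b
  proof -
    have "lay a < Suc k" using up that by auto
    then have "lay b \<le> Suc k" using lay_lt_nb that by auto
    then show False using s_in[of b] that edgeV by (auto split: if_splits)
  qed
  obtain p where p: "p \<in> V" "lay p = Suc k" using layer_ne[of "Suc k"] Suc by auto
  have sp: "\<sigma> p = -1" "x p = 1" using s_in[of p] p ev_self[OF p(2)] unfolding x_def Q1_def by auto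
  obtain q where q: "q \<in> V" "lay q = k" using layer_ne[of k] Suc by auto
  have "Suc k - lay q = 1" using q by simp
  then have "\<not> ev (Suc k) q" unfolding ev_def by simp
  then have sq: "\<sigma> q = 1" using s_in[of q] q by auto
  show ?case
  proof (cases "\<exists>a b. {a,b} \<in> E \<and> \<sigma> a = 1 \<and> \<sigma> b = 1")
    case True
    then obtain a b where ab: "{a,b} \<in> E" "\<sigma> a = 1" "\<sigma> b = 1" by auto
    have nb: "\<not> Bip"
    proof
      assume B: Bip
      have "even (lay a + Suc (Suc k))" "even (lay b + Suc (Suc k))"
        using up[OF ab(2)] up[OF ab(3)] up_par[of a "Suc k"] up_par[of b "Suc k"] by auto
      then show False using bip_par[OF B ab(1)] by blast
    qed
    define x' where "x' = (\<lambda>v. x v + 1/2 * \<sigma> v)"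
    have st: "(x, x') \<in> R" unfolding x'_def
    proof (rule toggle2[OF xP sg])
      show "(0::real) < 1/2" by simp
      show "x v = 0" if "\<sigma> v = 1" for v using up that by auto
      show "x v \<ge> 1/2" if "\<sigma> v = -1" for v using dn that by auto
      show "2 * (1/2::real) \<le> 1" by simp
      show "1/2 + x b \<le> 1" if "{a,b} \<in> E" "\<sigma> a = 1" "\<sigma> b = 0" for a b using uo that by blast
      show "(\<exists>v. \<sigma> v = -1 \<and> x v = 1/2) \<or> (\<exists>a b. {a,b} \<in> E \<and> \<sigma> a + \<sigma> b > 0 \<and> x a + x b + 1/2 * (\<sigma> a + \<sigma> b) = 1)"
        using ab up[OF ab(2)] up[OF ab(3)] by (intro disjI2 exI[of _ a] exI[of _ b]) auto
      show "(\<exists>v. \<sigma> v = 1) \<or> (\<exists>a b. {a,b} \<in> E \<and> \<sigma> a + \<sigma> b < 0 \<and> x a + x b = 1)" using sq by blast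
    qed
    have xh: "hi x" using o1_hi unfolding o1_def x_def Q1_def by auto
    have HA0: "HA 0 x'"
      unfolding HA_def
    proof (intro conjI ballI impI)
      show "x' \<in> P" using R_P[OF st] by auto
      show "hi x'" unfolding x'_def using hi_half[OF xh vals] up dn by auto
      fix v assume v: "v \<in> V" "lay v \<le> 0"
      then have "v = r" using lay0 by auto
      then show "x' v = (if ev 0 v then 1/2 else 0)"
        using s_in[of r] rV lay_r ev_self[OF lay_r] unfolding x'_def x_def Q1_def by auto
    qed
    have "wthn x' (Qh 0) (2 * D)" using HA_hub[OF HA0] by auto
    then have "wthn x (Qh 0) (Suc (2 * D))" using wthn_step[OF st] by auto
    then have "wthn x (Qh 0) (Suc k + 2 * D)" using wthn_mono by fastforce
    then show ?thesis using nb x_def by auto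
  next
    case False
    define x' where "x' = (\<lambda>v. x v + 1 * \<sigma> v)"
    have st: "(x, x') \<in> R" unfolding x'_def
    proof (rule toggle2[OF xP sg])
      show "(0::real) < 1" by simp
      show "x v = 0" if "\<sigma> v = 1" for v using up that by auto
      show "x v \<ge> 1" if "\<sigma> v = -1" for v using dn that by auto
      show "2 * (1::real) \<le> 1" if "{a,b} \<in> E" "\<sigma> a = 1" "\<sigma> b = 1" for a b using False that by blast
      show "1 + x b \<le> 1" if "{a,b} \<in> E" "\<sigma> a = 1" "\<sigma> b = 0" for a b using uo that by blast
      show "(\<exists>v. \<sigma> v = -1 \<and> x v = 1) \<or> (\<exists>a b. {a,b} \<in> E \<and> \<sigma> a + \<sigma> b > 0 \<and> x a + x b + 1 * (\<sigma> a + \<sigma> b) = 1)"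
        using sp by blast
      show "(\<exists>v. \<sigma> v = 1) \<or> (\<exists>a b. {a,b} \<in> E \<and> \<sigma> a + \<sigma> b < 0 \<and> x a + x b = 1)" using sq by blast
    qed
    have eq: "x' = Q1 k"
    proof
      fix v
      show "x' v = Q1 k v"
      proof (cases "v \<in> V \<and> lay v \<le> Suc k")
        case True
        show ?thesis
        proof (cases "ev (Suc k) v")
          case True2: True
          have "\<not> (lay v \<le> k \<and> ev k v)" using ev_Suc[of v k] True2 by auto
          then show ?thesis using True True2 s_in[of v] unfolding x'_def x_def Q1_def by auto
        next
          case F2: False
          have "lay v \<le> k" using ev_notk[of v "Suc k"] True F2 by auto
          then have "ev k v" using ev_Suc[of v k] F2 by auto
          then show ?thesis using True F2 s_in[of v] \<open>lay v \<le> k\<close> unfolding x'_def x_def Q1_def by auto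
        qed
      next
        case False
        then show ?thesis using s_out[OF False] unfolding x'_def x_def Q1_def by auto
      qed
    qed
    have "Q1 k \<in> P" using R_P[OF st] eq by auto
    then have IH: "wthn (Q1 k) (Q1 0) (k + 2 * D) \<or> (wthn (Q1 k) (Qh 0) (k + 2 * D) \<and> \<not> Bip)"
      using Suc by auto
    have st': "(x, Q1 k) \<in> R" using st eq by simp
    show ?thesis using IH wthn_step[OF st'] x_def by auto
  qed
qed

end

context fg
begin

definition W1 :: "nat \<Rightarrow> (nat \<Rightarrow> real) \<Rightarrow> bool" where
  "W1 k x \<longleftrightarrow> x \<in> P \<and> hi x \<and> (\<forall>v\<in>V. lay v \<le> k \<longrightarrow> x v = (if ev k v then 1 else 0))"
definition W0 :: "nat \<Rightarrow> (nat \<Rightarrow> real) \<Rightarrow> bool" where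
  "W0 k x \<longleftrightarrow> x \<in> P \<and> hi x \<and> (\<forall>v\<in>V. lay v \<le> k \<longrightarrow> x v = (if ev k v then 0 else 1))"

lemma W1_step:
  assumes H: "W1 k x" and k: "k < D"
  shows "\<exists>x'. (x,x') \<in> R \<and> ((W1 (Suc k) x' \<and> (o1 x \<longrightarrow> o1 x') \<and> (\<forall>a b. {a,b} \<in> E \<and> lay a = Suc k \<longrightarrow> lay b \<noteq> Suc k))
     \<or> (HA 0 x' \<and> \<not> (Bip \<and> o1 x)))"
proof -
  have xP: "x \<in> P" and xh: "hi x" and pat: "\<And>v. v \<in> V \<Longrightarrow> lay v \<le> k \<Longrightarrow> x v = (if ev k v then 1 else 0)"
    using H unfolding W1_def by auto
  have xv: "x v = 0 \<or> x v = 1/2 \<or> x v = 1" for v using xh unfolding hi_def by auto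
  have next0: "x v = 0" if vv: "v \<in> V" "lay v = Suc k" for v
  proof -
    have "v \<noteq> r" using vv lay_r by auto
    then obtain w where w: "w \<in> V" "{w,v} \<in> E" "lay w + 1 = lay v" using par vv by blast
    have "lay w = k" using w(3) vv by auto
    then have "x w = 1" using pat[OF w(1)] ev_self[of w k] by auto
    then show ?thesis using P_edge[OF xP w(2)] P_nonneg[OF xP vv(1)] by auto
  qed
  define U where "U = {v\<in>V. lay v = Suc k}"
  define Y where "Y = {w\<in>V. lay w > Suc k \<and> x w > 0 \<and> (\<exists>u\<in>U. {u,w} \<in> E)}"
  have Ulay: "\<forall>u\<in>U. u \<in> V \<and> lay u = Suc k" unfolding U_def by auto
  have Ylay: "\<forall>y\<in>Y. y \<in> V \<and> lay y > Suc k \<and> (\<exists>u\<in>U. {u,y} \<in> E)" unfolding Y_def by auto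
  define \<sigma> where "\<sigma> = sA k U Y"
  have sg: "sgn3 \<sigma>" unfolding \<sigma>_def using sgnA[OF Ulay Ylay] .
  have vals: "\<forall>v. \<sigma> v = 0 \<or> \<sigma> v = 1 \<or> \<sigma> v = -1" using sg unfolding sgn3_def by auto
  have s_in: "\<sigma> v = (if ev k v then -1 else 1)" if "v \<in> V" "lay v \<le> k" for v
    using sA_in[OF that] unfolding \<sigma>_def .
  have s_out: "\<sigma> v = (if v \<in> U then 1 else if v \<in> Y then -1 else 0)" if "\<not> (v \<in> V \<and> lay v \<le> k)" for v
    using sA_out[OF that] unfolding \<sigma>_def .
  have up: "x v = 0 \<and> even (lay v + Suc k)" if "\<sigma> v = 1" for v
  proof (cases "v \<in> V \<and> lay v \<le> k")
    case True
    then have "\<not> ev k v" using that s_in by (auto split: if_splits)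
    then show ?thesis using True pat up_par by auto
  next
    case False
    then have "v \<in> U" using that s_out by (auto split: if_splits)
    then show ?thesis using next0 Ulay by auto
  qed
  have dn: "x v = 1 \<or> (v \<in> Y \<and> x v > 0)" if "\<sigma> v = -1" for v
  proof (cases "v \<in> V \<and> lay v \<le> k")
    case True
    then have "ev k v" using that s_in by (auto split: if_splits)
    then show ?thesis using True pat by auto
  next
    case False
    then have "v \<in> Y" using that s_out by (auto split: if_splits)
    then show ?thesis unfolding Y_def by auto
  qed
  have dn2: "x v \<ge> 1/2" if "\<sigma> v = -1" for v using dn[OF that] xv[of v] by auto
  have uo: "x b = 0" if ab: "{a,b} \<in> E" "\<sigma> a = 1" "\<sigma> b = 0" for a b
  proof -
    have aV: "a \<in> V" and bV: "b \<in> V" using edgeV[OF ab(1)] by auto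
    show ?thesis
    proof (cases "lay a \<le> k")
      case True
      then have "\<not> ev k a" using ab(2) aV s_in by (auto split: if_splits)
      then have "lay a < k" using True ev_notk by auto
      then have "lay b \<le> k" using lay_lt_nb ab(1) by auto
      then show ?thesis using s_in[OF bV] ab(3) by (auto split: if_splits)
    next
      case False
      then have "a \<in> U" using ab(2) aV s_out by (auto split: if_splits)
      then have la: "lay a = Suc k" using Ulay by auto
      have lb: "lay b \<le> Suc (Suc k)" using lay_edge[OF ab(1)] la by auto
      have "\<not> lay b \<le> k" using s_in[OF bV] ab(3) by (auto split: if_splits)
      moreover have "b \<notin> U" "b \<notin> Y" using s_out[of b] ab(3) \<open>\<not> lay b \<le> k\<close> by (auto split: if_splits)
      ultimately have "lay b > Suc k" using bV unfolding U_def by auto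
      then have "\<not> x b > 0" using \<open>b \<notin> Y\<close> \<open>a \<in> U\<close> ab(1) bV unfolding Y_def by auto
      then show ?thesis using P_nonneg[OF xP bV] by auto
    qed
  qed
  obtain p where p: "p \<in> V" "lay p = k" using layer_ne[of k] k by auto
  have sp: "\<sigma> p = -1" "x p = 1" using s_in[of p] pat[of p] p ev_self[OF p(2)] by auto
  obtain u where u: "u \<in> V" "lay u = Suc k" using layer_ne[of "Suc k"] k by auto
  have su: "\<sigma> u = 1" using s_out[of u] u unfolding U_def by auto
  have rw: "(\<exists>v. \<sigma> v = 1) \<or> (\<exists>a b. {a,b} \<in> E \<and> \<sigma> a + \<sigma> b < 0 \<and> x a + x b = 1)" using su by blast
  have sr: "x r + 1/2 * \<sigma> r = 1/2" using s_in[of r] pat[of r] rV lay_r by auto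
  define Good where "Good \<longleftrightarrow> (\<forall>w\<in>Y. x w = 1) \<and> \<not> (\<exists>a b. {a,b} \<in> E \<and> \<sigma> a = 1 \<and> \<sigma> b = 1)"
  show ?thesis
  proof (cases Good)
    case True
    have dn1: "x v = 1" if "\<sigma> v = -1" for v using dn[OF that] True unfolding Good_def by auto
    define x' where "x' = (\<lambda>v. x v + 1 * \<sigma> v)"
    have st: "(x, x') \<in> R" unfolding x'_def
    proof (rule toggle2[OF xP sg])
      show "(0::real) < 1" by simp
      show "x v = 0" if "\<sigma> v = 1" for v using up that by auto
      show "x v \<ge> 1" if "\<sigma> v = -1" for v using dn1 that by auto
      show "2 * (1::real) \<le> 1" if "{a,b} \<in> E" "\<sigma> a = 1" "\<sigma> b = 1" for a b using True that unfolding Good_def by blast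
      show "1 + x b \<le> 1" if "{a,b} \<in> E" "\<sigma> a = 1" "\<sigma> b = 0" for a b using uo that by auto
      show "(\<exists>v. \<sigma> v = -1 \<and> x v = 1) \<or> (\<exists>a b. {a,b} \<in> E \<and> \<sigma> a + \<sigma> b > 0 \<and> x a + x b + 1 * (\<sigma> a + \<sigma> b) = 1)"
        using sp by blast
    qed (fact rw)
    have upx: "x v = 0" if "\<sigma> v = 1" for v using up that by auto
    have W: "W1 (Suc k) x'"
      unfolding W1_def
    proof (intro conjI ballI impI)
      show "x' \<in> P" using R_P[OF st] by auto
      show "hi x'" unfolding x'_def by (rule hi_full[OF xh vals upx dn1])
      fix v assume v: "v \<in> V" "lay v \<le> Suc k"
      show "x' v = (if ev (Suc k) v then 1 else 0)"
      proof (cases "lay v \<le> k")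
        case True
        then show ?thesis using pat[OF v(1) True] ev_Suc[OF True] s_in[OF v(1) True] unfolding x'_def by auto
      next
        case False
        then have lv: "lay v = Suc k" using v by auto
        then have "v \<in> U" unfolding U_def using v by auto
        then show ?thesis using next0[OF v(1) lv] ev_self[OF lv] s_out[of v] False unfolding x'_def by auto
      qed
    qed
    have O: "o1 x \<longrightarrow> o1 x'" unfolding x'_def using o1_full[OF _ vals upx dn1] by auto
    have NI: "\<forall>a b. {a,b} \<in> E \<and> lay a = Suc k \<longrightarrow> lay b \<noteq> Suc k"
    proof (intro allI impI)
      fix a b assume ab: "{a,b} \<in> E \<and> lay a = Suc k"
      show "lay b \<noteq> Suc k"
      proof
        assume lb: "lay b = Suc k"
        have "a \<in> U" "b \<in> U" using ab lb edgeV unfolding U_def by auto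
        then have "\<sigma> a = 1" "\<sigma> b = 1" using s_out ab lb by auto
        then show False using True ab unfolding Good_def by blast
      qed
    qed
    show ?thesis using st W O NI by blast
  next
    case False
    define x' where "x' = (\<lambda>v. x v + 1/2 * \<sigma> v)"
    have mw: "(\<exists>v. \<sigma> v = -1 \<and> x v = 1/2) \<or> (\<exists>a b. {a,b} \<in> E \<and> \<sigma> a + \<sigma> b > 0 \<and> x a + x b + 1/2 * (\<sigma> a + \<sigma> b) = 1)"
    proof (cases "\<forall>w\<in>Y. x w = 1")
      case True
      then obtain a b where ab: "{a,b} \<in> E" "\<sigma> a = 1" "\<sigma> b = 1" using False unfolding Good_def by blast
      then show ?thesis using up[OF ab(2)] up[OF ab(3)] by (intro disjI2 exI[of _ a] exI[of _ b]) auto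
    next
      case F2: False
      then obtain w where w: "w \<in> Y" "x w \<noteq> 1" by auto
      have "x w = 1/2" using w xv[of w] unfolding Y_def by auto
      moreover have "\<sigma> w = -1" using w Ylay s_out[of w] Ulay by fastforce
      ultimately show ?thesis by blast
    qed
    have st: "(x, x') \<in> R" unfolding x'_def
    proof (rule toggle2[OF xP sg])
      show "(0::real) < 1/2" by simp
      show "x v = 0" if "\<sigma> v = 1" for v using up that by auto
      show "x v \<ge> 1/2" if "\<sigma> v = -1" for v using dn2 that by auto
      show "2 * (1/2::real) \<le> 1" by simp
      show "1/2 + x b \<le> 1" if "{a,b} \<in> E" "\<sigma> a = 1" "\<sigma> b = 0" for a b using uo that by auto
    qed (fact mw, fact rw)
    have HA0: "HA 0 x'"
      unfolding HA_def
    proof (intro conjI ballI impI)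
      show "x' \<in> P" using R_P[OF st] by auto
      show "hi x'" unfolding x'_def using hi_half[OF xh vals] up dn2 by auto
      fix v assume v: "v \<in> V" "lay v \<le> 0"
      then have "v = r" using lay0 by auto
      then show "x' v = (if ev 0 v then 1/2 else 0)" using sr ev_self[OF lay_r] unfolding x'_def by auto
    qed
    have nb: "\<not> (Bip \<and> o1 x)"
    proof
      assume B: "Bip \<and> o1 x"
      have "Good" unfolding Good_def
      proof
        show "\<forall>w\<in>Y. x w = 1" using B unfolding o1_def Y_def by force
        show "\<not> (\<exists>a b. {a,b} \<in> E \<and> \<sigma> a = 1 \<and> \<sigma> b = 1)"
        proof
          assume "\<exists>a b. {a,b} \<in> E \<and> \<sigma> a = 1 \<and> \<sigma> b = 1"
          then obtain a b where ab: "{a,b} \<in> E" "\<sigma> a = 1" "\<sigma> b = 1" by blast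
          show False using bip_par[of a b "Suc k"] B ab up[OF ab(2)] up[OF ab(3)] by auto
        qed
      qed
      then show False using False by auto
    qed
    show ?thesis using st HA0 nb by blast
  qed
qed

lemma W0_step:
  assumes H: "W0 k x" and k: "k < D"
  shows "\<exists>x'. (x,x') \<in> R \<and> ((W0 (Suc k) x' \<and> (o1 x \<longrightarrow> o1 x')) \<or> (HA 0 x' \<and> \<not> (Bip \<and> o1 x)))"
proof -
  have xP: "x \<in> P" and xh: "hi x" and pat: "\<And>v. v \<in> V \<Longrightarrow> lay v \<le> k \<Longrightarrow> x v = (if ev k v then 0 else 1)"
    using H unfolding W0_def by auto
  have xv: "x v = 0 \<or> x v = 1/2 \<or> x v = 1" for v using xh unfolding hi_def by auto
  define Z where "Z = {v\<in>V. lay v = Suc k \<and> x v > 0}"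
  have Zlay: "\<forall>u\<in>Z. u \<in> V \<and> lay u = Suc k" unfolding Z_def by auto
  define \<sigma> where "\<sigma> = (\<lambda>v. - sA k Z {} v)"
  have sg: "sgn3 \<sigma>" unfolding \<sigma>_def by (rule sgn3_neg[OF sgnA[OF Zlay]]) auto
  have vals: "\<forall>v. \<sigma> v = 0 \<or> \<sigma> v = 1 \<or> \<sigma> v = -1" using sg unfolding sgn3_def by auto
  have s_in: "\<sigma> v = (if ev k v then 1 else -1)" if "v \<in> V" "lay v \<le> k" for v
    using sA_in[OF that] unfolding \<sigma>_def by auto
  have s_out: "\<sigma> v = (if v \<in> Z then -1 else 0)" if "\<not> (v \<in> V \<and> lay v \<le> k)" for v
    using sA_out[OF that] unfolding \<sigma>_def by auto
  have up: "x v = 0 \<and> even (lay v + k) \<and> v \<in> V \<and> lay v \<le> k" if "\<sigma> v = 1" for v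
  proof -
    have "v \<in> V \<and> lay v \<le> k" using that s_out by (cases "v \<in> V \<and> lay v \<le> k") (auto split: if_splits)
    moreover then have "ev k v" using that s_in by (auto split: if_splits)
    ultimately show ?thesis using pat ev_par2 by auto
  qed
  have dn: "x v = 1 \<or> (v \<in> Z \<and> x v > 0)" if "\<sigma> v = -1" for v
  proof (cases "v \<in> V \<and> lay v \<le> k")
    case True
    then have "\<not> ev k v" using that s_in by (auto split: if_splits)
    then show ?thesis using True pat by auto
  next
    case False
    then have "v \<in> Z" using that s_out by (auto split: if_splits)
    then show ?thesis unfolding Z_def by auto
  qed
  have dn2: "x v \<ge> 1/2" if "\<sigma> v = -1" for v using dn[OF that] xv[of v] by auto
  have uo: "x b = 0" if ab: "{a,b} \<in> E" "\<sigma> a = 1" "\<sigma> b = 0" for a b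
  proof -
    have bV: "b \<in> V" using edgeV[OF ab(1)] by auto
    have "lay a \<le> k" using up[OF ab(2)] by auto
    then have lb: "lay b \<le> Suc k" using lay_edge[OF ab(1)] by auto
    have "\<not> lay b \<le> k" using s_in[OF bV] ab(3) by (auto split: if_splits)
    then have "b \<notin> Z" using s_out[of b] ab(3) by (auto split: if_splits)
    then have "\<not> x b > 0" using bV lb \<open>\<not> lay b \<le> k\<close> unfolding Z_def by auto
    then show ?thesis using P_nonneg[OF xP bV] by auto
  qed
  obtain c where c: "c \<in> V" "lay c = Suc k" using layer_ne[of "Suc k"] k by auto
  have "c \<noteq> r" using c lay_r by auto
  then obtain p where p: "p \<in> V" "{p,c} \<in> E" "lay p + 1 = lay c" using par c by blast
  have lp: "lay p = k" using p c by auto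
  have sp: "\<sigma> p = 1" "x p = 0" using s_in[of p] pat[of p] p lp ev_self[OF lp] by auto
  have rw: "(\<exists>v. \<sigma> v = 1) \<or> (\<exists>a b. {a,b} \<in> E \<and> \<sigma> a + \<sigma> b < 0 \<and> x a + x b = 1)" using sp by blast
  have sr: "x r + 1/2 * \<sigma> r = 1/2" using s_in[of r] pat[of r] rV lay_r by auto
  define Good where "Good \<longleftrightarrow> (\<forall>w\<in>Z. x w = 1) \<and> \<not> (\<exists>a b. {a,b} \<in> E \<and> \<sigma> a = 1 \<and> \<sigma> b = 1)"
  show ?thesis
  proof (cases Good)
    case True
    have dn1: "x v = 1" if "\<sigma> v = -1" for v using dn[OF that] True unfolding Good_def by auto
    define x' where "x' = (\<lambda>v. x v + 1 * \<sigma> v)"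
    have mw: "(\<exists>v. \<sigma> v = -1 \<and> x v = 1) \<or> (\<exists>a b. {a,b} \<in> E \<and> \<sigma> a + \<sigma> b > 0 \<and> x a + x b + 1 * (\<sigma> a + \<sigma> b) = 1)"
    proof (cases "c \<in> Z")
      case True
      then have "\<sigma> c = -1" "x c = 1" using s_out[of c] c dn1 by auto
      then show ?thesis by blast
    next
      case False
      have "\<sigma> c = 0" using s_out[of c] c False by auto
      moreover have "x c = 0" using False c P_nonneg[OF xP c(1)] unfolding Z_def by auto
      ultimately show ?thesis using p(2) sp by (intro disjI2 exI[of _ p] exI[of _ c]) auto
    qed
    have st: "(x, x') \<in> R" unfolding x'_def
    proof (rule toggle2[OF xP sg])
      show "(0::real) < 1" by simp
      show "x v = 0" if "\<sigma> v = 1" for v using up that by auto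
      show "x v \<ge> 1" if "\<sigma> v = -1" for v using dn1 that by auto
      show "2 * (1::real) \<le> 1" if "{a,b} \<in> E" "\<sigma> a = 1" "\<sigma> b = 1" for a b using True that unfolding Good_def by blast
      show "1 + x b \<le> 1" if "{a,b} \<in> E" "\<sigma> a = 1" "\<sigma> b = 0" for a b using uo that by auto
    qed (fact mw, fact rw)
    have upx: "x v = 0" if "\<sigma> v = 1" for v using up that by auto
    have W: "W0 (Suc k) x'"
      unfolding W0_def
    proof (intro conjI ballI impI)
      show "x' \<in> P" using R_P[OF st] by auto
      show "hi x'" unfolding x'_def by (rule hi_full[OF xh vals upx dn1])
      fix v assume v: "v \<in> V" "lay v \<le> Suc k"
      show "x' v = (if ev (Suc k) v then 0 else 1)"
      proof (cases "lay v \<le> k")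
        case True
        then show ?thesis using pat[OF v(1) True] ev_Suc[OF True] s_in[OF v(1) True] unfolding x'_def by auto
      next
        case False
        then have lv: "lay v = Suc k" using v by auto
        show ?thesis
        proof (cases "v \<in> Z")
          case True
          then show ?thesis using dn1[of v] s_out[of v] False ev_self[OF lv] unfolding x'_def by auto
        next
          case F2: False
          then have "x v = 0" using v lv P_nonneg[OF xP v(1)] unfolding Z_def by auto
          then show ?thesis using s_out[of v] False F2 ev_self[OF lv] unfolding x'_def by auto
        qed
      qed
    qed
    have O: "o1 x \<longrightarrow> o1 x'" unfolding x'_def using o1_full[OF _ vals upx dn1] by auto
    show ?thesis using st W O by blast
  next
    case False
    define x' where "x' = (\<lambda>v. x v + 1/2 * \<sigma> v)"
    have mw: "(\<exists>v. \<sigma> v = -1 \<and> x v = 1/2) \<or> (\<exists>a b. {a,b} \<in> E \<and> \<sigma> a + \<sigma> b > 0 \<and> x a + x b + 1/2 * (\<sigma> a + \<sigma> b) = 1)"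
    proof (cases "\<forall>w\<in>Z. x w = 1")
      case True
      then obtain a b where ab: "{a,b} \<in> E" "\<sigma> a = 1" "\<sigma> b = 1" using False unfolding Good_def by blast
      then show ?thesis using up[OF ab(2)] up[OF ab(3)] by (intro disjI2 exI[of _ a] exI[of _ b]) auto
    next
      case F2: False
      then obtain w where w: "w \<in> Z" "x w \<noteq> 1" by auto
      have "x w = 1/2" using w xv[of w] unfolding Z_def by auto
      moreover have "\<sigma> w = -1" using w Zlay s_out[of w] by fastforce
      ultimately show ?thesis by blast
    qed
    have st: "(x, x') \<in> R" unfolding x'_def
    proof (rule toggle2[OF xP sg])
      show "(0::real) < 1/2" by simp
      show "x v = 0" if "\<sigma> v = 1" for v using up that by auto
      show "x v \<ge> 1/2" if "\<sigma> v = -1" for v using dn2 that by auto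
      show "2 * (1/2::real) \<le> 1" by simp
      show "1/2 + x b \<le> 1" if "{a,b} \<in> E" "\<sigma> a = 1" "\<sigma> b = 0" for a b using uo that by auto
    qed (fact mw, fact rw)
    have HA0: "HA 0 x'"
      unfolding HA_def
    proof (intro conjI ballI impI)
      show "x' \<in> P" using R_P[OF st] by auto
      show "hi x'" unfolding x'_def using hi_half[OF xh vals] up dn2 by auto
      fix v assume v: "v \<in> V" "lay v \<le> 0"
      then have "v = r" using lay0 by auto
      then show "x' v = (if ev 0 v then 1/2 else 0)" using sr ev_self[OF lay_r] unfolding x'_def by auto
    qed
    have nb: "\<not> (Bip \<and> o1 x)"
    proof
      assume B: "Bip \<and> o1 x"
      have "Good" unfolding Good_def
      proof
        show "\<forall>w\<in>Z. x w = 1" using B unfolding o1_def Z_def by force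
        show "\<not> (\<exists>a b. {a,b} \<in> E \<and> \<sigma> a = 1 \<and> \<sigma> b = 1)"
        proof
          assume "\<exists>a b. {a,b} \<in> E \<and> \<sigma> a = 1 \<and> \<sigma> b = 1"
          then obtain a b where ab: "{a,b} \<in> E" "\<sigma> a = 1" "\<sigma> b = 1" by blast
          show False using bip_par[of a b k] B ab up[OF ab(2)] up[OF ab(3)] by auto
        qed
      qed
      then show False using False by auto
    qed
    show ?thesis using st HA0 nb by blast
  qed
qed

end

context fg
begin

lemma W1_D: assumes "W1 D x" shows "x = Q1 D"
proof
  fix v
  have xP: "x \<in> P" using assms unfolding W1_def by auto
  show "x v = Q1 D v"
  proof (cases "v \<in> V")
    case True
    then show ?thesis using assms lay_D[OF True] unfolding W1_def Q1_def by auto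
  next
    case False
    then show ?thesis using P_out[OF xP False] unfolding Q1_def by auto
  qed
qed

lemma W0_D: assumes "W0 D x" shows "x = Q1 (D - 1)"
proof
  fix v
  have xP: "x \<in> P" using assms unfolding W0_def by auto
  show "x v = Q1 (D - 1) v"
  proof (cases "v \<in> V")
    case True
    have l: "lay v \<le> D" using lay_D[OF True] .
    show ?thesis
    proof (cases "lay v = D")
      case True2: True
      then show ?thesis using assms True ev_self[OF True2] D_pos unfolding W0_def Q1_def by auto
    next
      case False
      then have l2: "lay v \<le> D - 1" using l by auto
      then show ?thesis using assms True ev_pred[OF l2 D_pos] l unfolding W0_def Q1_def by auto
    qed
  next
    case False
    then show ?thesis using P_out[OF xP False] unfolding Q1_def by auto
  qed
qed

lemma W1_reach: "W1 k x \<Longrightarrow> k \<le> D \<Longrightarrow>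
  (wthn x (Qh 0) (D - k + 3 * D) \<and> \<not> (Bip \<and> o1 x)) \<or>
  (wthn x (Q1 0) (D - k + 3 * D) \<and> (\<forall>a b. {a,b} \<in> E \<and> lay a = lay b \<longrightarrow> lay a \<le> k))"
proof (induction "D - k" arbitrary: k x)
  case 0
  then have kD: "k = D" by auto
  then have xe: "x = Q1 D" using W1_D 0 by auto
  have "Q1 D \<in> P" using 0 xe unfolding W1_def by auto
  then have C: "wthn (Q1 D) (Q1 0) (D + 2 * D) \<or> (wthn (Q1 D) (Qh 0) (D + 2 * D) \<and> \<not> Bip)"
    using C1_reach[of D] by blast
  have ni: "\<forall>a b. {a,b} \<in> E \<and> lay a = lay b \<longrightarrow> lay a \<le> k" using lay_D edgeV kD by blast
  have b: "D + 2 * D \<le> D - k + 3 * D" by auto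
  show ?case
  proof (cases "wthn (Q1 D) (Q1 0) (D + 2 * D)")
    case True
    then show ?thesis using ni xe wthn_mono[OF True b] by blast
  next
    case False
    then have "wthn (Q1 D) (Qh 0) (D + 2 * D) \<and> \<not> Bip" using C by blast
    then show ?thesis using xe wthn_mono[OF _ b] by blast
  qed
next
  case (Suc n)
  then have k: "k < D" by auto
  obtain x' where x': "(x,x') \<in> R"
    "(W1 (Suc k) x' \<and> (o1 x \<longrightarrow> o1 x') \<and> (\<forall>a b. {a,b} \<in> E \<and> lay a = Suc k \<longrightarrow> lay b \<noteq> Suc k))
     \<or> (HA 0 x' \<and> \<not> (Bip \<and> o1 x))" using W1_step[OF Suc(3) k] by blast
  have eqb: "Suc (D - Suc k + 3 * D) = D - k + 3 * D" using k by auto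
  show ?case using x'(2)
  proof
    assume A: "W1 (Suc k) x' \<and> (o1 x \<longrightarrow> o1 x') \<and> (\<forall>a b. {a,b} \<in> E \<and> lay a = Suc k \<longrightarrow> lay b \<noteq> Suc k)"
    have IH: "(wthn x' (Qh 0) (D - Suc k + 3 * D) \<and> \<not> (Bip \<and> o1 x')) \<or>
      (wthn x' (Q1 0) (D - Suc k + 3 * D) \<and> (\<forall>a b. {a,b} \<in> E \<and> lay a = lay b \<longrightarrow> lay a \<le> Suc k))"
      using Suc(1)[of "Suc k" x'] Suc(2) A k by auto
    show ?thesis using IH
    proof
      assume L: "wthn x' (Qh 0) (D - Suc k + 3 * D) \<and> \<not> (Bip \<and> o1 x')"
      then have "wthn x (Qh 0) (Suc (D - Suc k + 3 * D))" using wthn_step[OF x'(1)] by blast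
      then have "wthn x (Qh 0) (D - k + 3 * D)" unfolding eqb .
      moreover have "\<not> (Bip \<and> o1 x)" using L A by blast
      ultimately show ?thesis by blast
    next
      assume L: "wthn x' (Q1 0) (D - Suc k + 3 * D) \<and> (\<forall>a b. {a,b} \<in> E \<and> lay a = lay b \<longrightarrow> lay a \<le> Suc k)"
      have "\<forall>a b. {a,b} \<in> E \<and> lay a = lay b \<longrightarrow> lay a \<le> k"
      proof (intro allI impI)
        fix a b assume ab: "{a,b} \<in> E \<and> lay a = lay b"
        then have "lay a \<le> Suc k" using L by blast
        moreover have "lay a \<noteq> Suc k" using A ab by metis
        ultimately show "lay a \<le> k" by auto
      qed
      moreover have "wthn x (Q1 0) (Suc (D - Suc k + 3 * D))" using wthn_step[OF x'(1)] L by blast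
      ultimately show ?thesis unfolding eqb by blast
    qed
  next
    assume B: "HA 0 x' \<and> \<not> (Bip \<and> o1 x)"
    have "wthn x' (Qh 0) (2 * D)" using HA_hub B by auto
    then have "wthn x (Qh 0) (Suc (2 * D))" using wthn_step[OF x'(1)] by auto
    moreover have "Suc (2 * D) \<le> D - k + 3 * D" using k by auto
    ultimately show ?thesis using B wthn_mono by blast
  qed
qed

lemma W0_reach: "W0 k x \<Longrightarrow> k \<le> D \<Longrightarrow>
  (wthn x (Qh 0) (D - k + 3 * D) \<and> \<not> (Bip \<and> o1 x)) \<or> wthn x (Q1 0) (D - k + 3 * D)"
proof (induction "D - k" arbitrary: k x)
  case 0
  then have kD: "k = D" by auto
  then have xe: "x = Q1 (D - 1)" using W0_D 0 by auto
  have "Q1 (D - 1) \<in> P" using 0 xe unfolding W0_def by auto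
  then have C: "wthn (Q1 (D - 1)) (Q1 0) (D - 1 + 2 * D) \<or> (wthn (Q1 (D - 1)) (Qh 0) (D - 1 + 2 * D) \<and> \<not> Bip)"
    using C1_reach[of "D - 1"] by simp
  have b: "D - 1 + 2 * D \<le> D - k + 3 * D" by auto
  show ?case
  proof (cases "wthn (Q1 (D - 1)) (Q1 0) (D - 1 + 2 * D)")
    case True
    then show ?thesis using xe wthn_mono[OF True b] by blast
  next
    case False
    then have "wthn (Q1 (D - 1)) (Qh 0) (D - 1 + 2 * D) \<and> \<not> Bip" using C by blast
    then show ?thesis using xe wthn_mono[OF _ b] by blast
  qed
next
  case (Suc n)
  then have k: "k < D" by auto
  obtain x' where x': "(x,x') \<in> R" "(W0 (Suc k) x' \<and> (o1 x \<longrightarrow> o1 x')) \<or> (HA 0 x' \<and> \<not> (Bip \<and> o1 x))"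
    using W0_step[OF Suc(3) k] by blast
  have eqb: "Suc (D - Suc k + 3 * D) = D - k + 3 * D" using k by auto
  show ?case using x'(2)
  proof
    assume A: "W0 (Suc k) x' \<and> (o1 x \<longrightarrow> o1 x')"
    have IH: "(wthn x' (Qh 0) (D - Suc k + 3 * D) \<and> \<not> (Bip \<and> o1 x')) \<or> wthn x' (Q1 0) (D - Suc k + 3 * D)"
      using Suc(1)[of "Suc k" x'] Suc(2) A k by auto
    then show ?thesis
    proof
      assume L: "wthn x' (Qh 0) (D - Suc k + 3 * D) \<and> \<not> (Bip \<and> o1 x')"
      then have "wthn x (Qh 0) (Suc (D - Suc k + 3 * D))" using wthn_step[OF x'(1)] by blast
      then have "wthn x (Qh 0) (D - k + 3 * D)" unfolding eqb .
      moreover have "\<not> (Bip \<and> o1 x)" using L A by blast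
      ultimately show ?thesis by blast
    next
      assume L: "wthn x' (Q1 0) (D - Suc k + 3 * D)"
      then have "wthn x (Q1 0) (Suc (D - Suc k + 3 * D))" using wthn_step[OF x'(1)] by blast
      then have "wthn x (Q1 0) (D - k + 3 * D)" unfolding eqb .
      then show ?thesis by blast
    qed
  next
    assume B: "HA 0 x' \<and> \<not> (Bip \<and> o1 x)"
    have "wthn x' (Qh 0) (2 * D)" using HA_hub B by auto
    then have "wthn x (Qh 0) (Suc (2 * D))" using wthn_step[OF x'(1)] by auto
    moreover have "Suc (2 * D) \<le> D - k + 3 * D" using k by auto
    ultimately show ?thesis using B wthn_mono by blast
  qed
qed

lemma start: assumes xP: "x \<in> P" and xh: "hi x"
  shows "(wthn x (Qh 0) (4 * D) \<and> \<not> (Bip \<and> o1 x)) \<or> wthn x (Q1 0) (4 * D)"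
proof -
  have "x r = 0 \<or> x r = 1/2 \<or> x r = 1" using xh unfolding hi_def by auto
  moreover have r0: "\<And>v. v \<in> V \<Longrightarrow> lay v \<le> 0 \<Longrightarrow> v = r" using lay0 by auto
  moreover have er: "ev 0 r" using ev_self[OF lay_r] .
  ultimately consider "x r = 1/2" | "W1 0 x" | "W0 0 x"
    unfolding W1_def W0_def using xP xh by force
  then show ?thesis
  proof cases
    case 1
    then have "HA 0 x" unfolding HA_def using xP xh r0 er by force
    then have "wthn x (Qh 0) (2 * D)" using HA_hub by auto
    moreover have "\<not> o1 x" using 1 unfolding o1_def by (metis one_neq_zero zero_neq_numeral divide_eq_1_iff divide_eq_0_iff numeral_One numeral_eq_iff semiring_norm(85))
    ultimately show ?thesis using wthn_mono[of x "Qh 0" "2 * D" "4 * D"] by auto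
  next
    case 2
    then show ?thesis using W1_reach[of 0 x] wthn_mono[of x _ "D + 3 * D" "4 * D"] by auto
  next
    case 3
    then show ?thesis using W0_reach[of 0 x] wthn_mono[of x _ "D + 3 * D" "4 * D"] by auto
  qed
qed

lemma Q1_0_P: "Q1 0 \<in> P"
  unfolding inP
proof (intro conjI)
  show "supported_on V (Q1 0)" unfolding supported_on_def Q1_def by auto
  show "\<forall>v\<in>V. 0 \<le> Q1 0 v" unfolding Q1_def by auto
  show "\<forall>a b. {a, b} \<in> E \<longrightarrow> Q1 0 a + Q1 0 b \<le> 1"
  proof (intro allI impI)
    fix a b assume e: "{a,b} \<in> E"
    have "a \<noteq> b" using edgeV[OF e] by auto
    then have "\<not> (a \<in> V \<and> lay a \<le> 0 \<and> b \<in> V \<and> lay b \<le> 0)" using lay0 by auto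
    then show "Q1 0 a + Q1 0 b \<le> 1" unfolding Q1_def by auto
  qed
qed

lemma er_hub: assumes "\<not> Bip" shows "wthn (Q1 0) (Qh 0) (4 * D)"
proof -
  have W: "W1 0 (Q1 0)" unfolding W1_def
  proof (intro conjI ballI impI)
    show "Q1 0 \<in> P" by (rule Q1_0_P)
    show "hi (Q1 0)" unfolding hi_def Q1_def by auto
    fix v assume "v \<in> V" "lay v \<le> 0"
    then show "Q1 0 v = (if ev 0 v then 1 else 0)" unfolding Q1_def by auto
  qed
  have imp: "(\<forall>a b. {a,b} \<in> E \<and> lay a = lay b \<longrightarrow> lay a \<le> 0) \<longrightarrow> Bip"
  proof
    assume h: "\<forall>a b. {a,b} \<in> E \<and> lay a = lay b \<longrightarrow> lay a \<le> 0"
    show Bip unfolding Bip_def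
    proof (intro allI impI notI)
      fix a b assume ab: "{a,b} \<in> E" "lay a = lay b"
      then have "a = r" "b = r" using h lay0 edgeV by (metis le_zero_eq)+
      then show False using edgeV[OF ab(1)] by auto
    qed
  qed
  have WR: "(wthn (Q1 0) (Qh 0) (D - 0 + 3 * D) \<and> \<not> (Bip \<and> o1 (Q1 0))) \<or>
    (wthn (Q1 0) (Q1 0) (D - 0 + 3 * D) \<and> (\<forall>a b. {a,b} \<in> E \<and> lay a = lay b \<longrightarrow> lay a \<le> 0))"
    using W1_reach[OF W] by blast
  have "wthn (Q1 0) (Qh 0) (D - 0 + 3 * D)" using WR imp assms by blast
  then show ?thesis using wthn_mono[of "Q1 0" "Qh 0" "D - 0 + 3 * D" "4 * D"] by auto
qed

end

context fg
begin

lemma has_nb: assumes v: "v \<in> V" shows "\<exists>w. {v,w} \<in> E"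
proof (cases "v = r")
  case False
  then obtain w where "{w,v} \<in> E" using par v by blast
  then show ?thesis by (metis insert_commute)
next
  case True
  obtain b where b: "b \<in> V" "lay b = 1" using layer_ne[of 1] D_pos by auto
  have "b \<noteq> r" using b lay_r by auto
  then obtain w where w: "w \<in> V" "{w,b} \<in> E" "lay w + 1 = lay b" using par b by blast
  have "w = r" using lay0 w b by auto
  then show ?thesis using w True by blast
qed

lemma P_le1: "x \<in> P \<Longrightarrow> v \<in> V \<Longrightarrow> x v \<le> 1"
proof -
  assume xP: "x \<in> P" and v: "v \<in> V"
  obtain w where w: "{v,w} \<in> E" using has_nb[OF v] by blast
  have "w \<in> V" using edgeV[OF w] by auto
  then show ?thesis using P_edge[OF xP w] P_nonneg[OF xP] by force
qed

definition dd :: "real \<Rightarrow> real" where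
  "dd p = (if 0 < p \<and> p < 1/2 then 1 else if 1/2 < p \<and> p < 1 then -1 else 0)"

lemma dd_tight: "0 \<le> p \<Longrightarrow> p \<le> 1 \<Longrightarrow> 0 \<le> q \<Longrightarrow> q \<le> 1 \<Longrightarrow> p + q = 1 \<Longrightarrow> dd p + dd q = 0"
  unfolding dd_def by auto

lemma vertex_P: "is_vertex P x \<Longrightarrow> x \<in> P" unfolding is_vertex_def by auto

lemma vertex_mid: assumes "is_vertex P x" "y \<in> P" "z \<in> P" "x = (\<lambda>v. 1/2 * y v + (1 - 1/2) * z v)"
  shows "y = z"
proof -
  have "\<forall>y\<in>P. \<forall>z\<in>P. \<forall>t::real. 0 < t \<and> t < 1 \<and> x = (\<lambda>v. t * y v + (1 - t) * z v) \<longrightarrow> y = z"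
    using assms(1) unfolding is_vertex_def by blast
  then have "0 < (1/2::real) \<and> 1/2 < (1::real) \<and> x = (\<lambda>v. 1/2 * y v + (1 - 1/2) * z v) \<longrightarrow> y = z"
    using assms(2,3) by blast
  then show ?thesis using assms(4) by simp
qed

lemma vert_hi: assumes vx: "is_vertex P x" shows "hi x"
proof (rule ccontr)
  assume nh: "\<not> hi x"
  have xP: "x \<in> P" using vertex_P[OF vx] .
  define d where "d v = (if v \<in> V then dd (x v) else 0)" for v
  obtain v0 where v0: "\<not> (x v0 = 0 \<or> x v0 = 1/2 \<or> x v0 = 1)" using nh unfolding hi_def by auto
  have v0V: "v0 \<in> V" using v0 P_out[OF xP] by auto
  have d0: "d v0 \<noteq> 0" using v0 v0V P_nonneg[OF xP v0V] P_le1[OF xP v0V] unfolding d_def dd_def by auto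
  define T1 where "T1 = (\<lambda>v. min (x v) (min \<bar>x v - 1/2\<bar> (1 - x v))) ` {v\<in>V. d v \<noteq> 0}"
  define T2 where "T2 = (\<lambda>(a,b). (1 - x a - x b)/2) ` {(a,b). a \<in> V \<and> b \<in> V \<and> {a,b} \<in> E \<and> x a + x b < 1}"
  define T where "T = T1 \<union> T2"
  have fT: "finite T"
  proof -
    have "finite {v\<in>V. d v \<noteq> 0}" using finV by auto
    moreover have "finite {(a,b). a \<in> V \<and> b \<in> V \<and> {a,b} \<in> E \<and> x a + x b < 1}"
      by (rule finite_subset[of _ "V \<times> V"]) (use finV in auto)
    ultimately show ?thesis unfolding T_def T1_def T2_def by auto
  qed
  have neT: "T \<noteq> {}" using v0V d0 unfolding T_def T1_def by auto
  have posT: "t > 0" if "t \<in> T" for t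
  proof -
    have "t \<in> T1 \<or> t \<in> T2" using that unfolding T_def by auto
    then show ?thesis
    proof
      assume "t \<in> T1"
      then obtain v where v: "v \<in> V" "d v \<noteq> 0" "t = min (x v) (min \<bar>x v - 1/2\<bar> (1 - x v))" unfolding T1_def by auto
      then have "0 < x v \<and> x v < 1 \<and> x v \<noteq> 1/2" unfolding d_def dd_def by (auto split: if_splits)
      then show ?thesis using v(3) by auto
    next
      assume "t \<in> T2"
      then show ?thesis unfolding T2_def by auto
    qed
  qed
  define \<epsilon> where "\<epsilon> = Min T"
  have epos: "\<epsilon> > 0" unfolding \<epsilon>_def using Min_in[OF fT neT] posT by auto
  have eT1: "\<epsilon> \<le> min (x v) (min \<bar>x v - 1/2\<bar> (1 - x v))" if "v \<in> V" "d v \<noteq> 0" for v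
    unfolding \<epsilon>_def using that fT unfolding T_def T1_def by (intro Min_le) auto
  have eT2: "\<epsilon> \<le> (1 - x a - x b)/2" if "{a,b} \<in> E" "x a + x b < 1" for a b
  proof -
    have "(1 - x a - x b)/2 \<in> T" using that edgeV unfolding T_def T2_def by (auto intro!: image_eqI[of _ _ "(a,b)"])
    then show ?thesis unfolding \<epsilon>_def using fT by (intro Min_le) auto
  qed
  have dvals: "d v = 0 \<or> d v = 1 \<or> d v = -1" for v unfolding d_def dd_def by auto
  have yP: "(\<lambda>v. x v + s * \<epsilon> * d v) \<in> P" if s: "s = 1 \<or> s = -1" for s
    unfolding inP
  proof (intro conjI ballI allI impI)
    show "supported_on V (\<lambda>v. x v + s * \<epsilon> * d v)" using xP unfolding inP supported_on_def d_def by auto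
    fix v assume v: "v \<in> V"
    show "0 \<le> x v + s * \<epsilon> * d v"
    proof (cases "d v = 0")
      case True then show ?thesis using P_nonneg[OF xP v] by simp
    next
      case False
      then have "\<epsilon> \<le> x v" using eT1[OF v] by auto
      then show ?thesis using s dvals[of v] epos by auto
    qed
  next
    fix a b assume e: "{a,b} \<in> E"
    have aV: "a \<in> V" and bV: "b \<in> V" using edgeV[OF e] by auto
    have le: "x a + x b \<le> 1" using P_edge[OF xP e] .
    show "x a + s * \<epsilon> * d a + (x b + s * \<epsilon> * d b) \<le> 1"
    proof (cases "x a + x b < 1")
      case True
      have h1: "\<epsilon> \<le> (1 - x a - x b)/2" using eT2[OF e True] .
      have h2: "\<epsilon> + \<epsilon> \<le> 1 - x a - x b" using h1 by (simp add: field_simps)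
      have h3: "s * \<epsilon> * d a \<le> \<epsilon>" "s * \<epsilon> * d b \<le> \<epsilon>" using s dvals[of a] dvals[of b] epos by auto
      have "s * \<epsilon> * d a + s * \<epsilon> * d b \<le> \<epsilon> + \<epsilon>" using add_mono[OF h3] .
      then have "s * \<epsilon> * d a + s * \<epsilon> * d b \<le> 1 - x a - x b" using h2 by (rule order_trans)
      then show ?thesis by (simp add: algebra_simps)
    next
      case False
      then have eq: "x a + x b = 1" using le by auto
      have "dd (x a) + dd (x b) = 0"
        using dd_tight[OF P_nonneg[OF xP aV] P_le1[OF xP aV] P_nonneg[OF xP bV] P_le1[OF xP bV] eq] .
      then have "d a + d b = 0" unfolding d_def using aV bV by auto
      then have "s * \<epsilon> * d a + s * \<epsilon> * d b = 0" by (metis distrib_left mult_zero_right)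
      then show ?thesis using eq by linarith
    qed
  qed
  have mid: "x = (\<lambda>v. 1/2 * (x v + 1 * \<epsilon> * d v) + (1 - 1/2) * (x v + (-1) * \<epsilon> * d v))"
    by (auto simp: field_simps)
  have "(\<lambda>v. x v + 1 * \<epsilon> * d v) = (\<lambda>v. x v + (-1) * \<epsilon> * d v)"
    by (rule vertex_mid[OF vx yP yP mid]) auto
  then have "x v0 + \<epsilon> * d v0 = x v0 - \<epsilon> * d v0" by (metis mult_1 mult_minus1 diff_conv_add_uminus minus_mult_left)
  then show False using d0 epos by auto
qed

lemma vert_o1: assumes B: "Bip" and vx: "is_vertex P x" shows "o1 x"
proof (rule ccontr)
  assume no: "\<not> o1 x"
  have xP: "x \<in> P" using vertex_P[OF vx] .
  have xh: "hi x" using vert_hi[OF vx] .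
  have xv: "x v = 0 \<or> x v = 1/2 \<or> x v = 1" for v using xh unfolding hi_def by auto
  obtain v0 where v0: "x v0 = 1/2" using no xv unfolding o1_def by blast
  define d where "d v = (if x v = 1/2 then (if even (lay v) then 1/2 else -1/2) else (0::real))" for v
  have yP: "(\<lambda>v. x v + s * d v) \<in> P" if s: "s = 1 \<or> s = -1" for s
    unfolding inP
  proof (intro conjI ballI allI impI)
    show "supported_on V (\<lambda>v. x v + s * d v)" using xP unfolding inP supported_on_def d_def by auto
    fix v assume v: "v \<in> V"
    show "0 \<le> x v + s * d v" using s P_nonneg[OF xP v] unfolding d_def by auto
  next
    fix a b assume e: "{a,b} \<in> E"
    have le: "x a + x b \<le> 1" using P_edge[OF xP e] .
    show "x a + s * d a + (x b + s * d b) \<le> 1"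
    proof (cases "x a = 1/2 \<and> x b = 1/2")
      case True
      have "even (lay a) \<noteq> even (lay b)"
        using bip_par[OF B e, of 0] bip_par[OF B e, of 1] by auto
      then have "d a + d b = 0" unfolding d_def using True by auto
      then show ?thesis using le s by (auto simp: algebra_simps)
    next
      case False
      then consider "x a \<noteq> 1/2" "x b \<noteq> 1/2" | "x a = 1/2" "x b = 0" | "x a = 0" "x b = 1/2"
        using xv[of a] xv[of b] le by force
      then show ?thesis
      proof cases
        case 1 then show ?thesis using le unfolding d_def by auto
      next
        case 2 then show ?thesis using s unfolding d_def by auto
      next
        case 3 then show ?thesis using s unfolding d_def by auto
      qed
    qed
  qed
  have mid: "x = (\<lambda>v. 1/2 * (x v + 1 * d v) + (1 - 1/2) * (x v + (-1) * d v))"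
    by (auto simp: field_simps)
  have "(\<lambda>v. x v + 1 * d v) = (\<lambda>v. x v + (-1) * d v)"
    by (rule vertex_mid[OF vx yP yP mid]) auto
  then have "x v0 + d v0 = x v0 - d v0" by (metis mult_1 mult_minus1 diff_conv_add_uminus)
  then show False using v0 unfolding d_def by (auto split: if_splits)
qed

lemma wthn_trans: "wthn a b m \<Longrightarrow> wthn b c n \<Longrightarrow> wthn a c (m + n)"
  unfolding wthn_def using rp_trans by (meson add_mono)

definition "Hub = (if Bip then Q1 0 else Qh 0)"

lemma to_hub: assumes vx: "is_vertex P x" shows "wthn x Hub (8 * D)"
proof -
  have xP: "x \<in> P" using vertex_P[OF vx] .
  have xh: "hi x" using vert_hi[OF vx] .
  have S: "(wthn x (Qh 0) (4 * D) \<and> \<not> (Bip \<and> o1 x)) \<or> wthn x (Q1 0) (4 * D)" using start[OF xP xh] .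
  show ?thesis
  proof (cases Bip)
    case True
    then have "o1 x" using vert_o1 vx by auto
    then have "wthn x (Q1 0) (4 * D)" using S True by auto
    then show ?thesis using True wthn_mono unfolding Hub_def by fastforce
  next
    case False
    show ?thesis
    proof (cases "wthn x (Qh 0) (4 * D)")
      case True
      then show ?thesis using False wthn_mono unfolding Hub_def by fastforce
    next
      case F2: False
      then have "wthn x (Q1 0) (4 * D)" using S by auto
      then have "wthn x (Qh 0) (4 * D + 4 * D)" using wthn_trans er_hub[OF False] by blast
      then show ?thesis using False unfolding Hub_def by simp
    qed
  qed
qed

lemma R_sym: "(a,b) \<in> R \<Longrightarrow> (b,a) \<in> R" unfolding R_def by auto

lemma R_pow_sym: "(a,b) \<in> R ^^ n \<Longrightarrow> (b,a) \<in> R ^^ n"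
proof (induction n arbitrary: b)
  case 0 then show ?case by simp
next
  case (Suc n)
  then obtain c where c: "(a,c) \<in> R ^^ n" "(c,b) \<in> R" by (meson relpow_Suc_E)
  have "(c,a) \<in> R ^^ n" using Suc.IH[OF c(1)] .
  then show ?case using R_sym[OF c(2)] relpow_Suc_I2 by metis
qed

lemma R_CS: "(a,b) \<in> R ^^ n \<Longrightarrow> (a,b) \<in> CS ^^ n"
proof (induction n arbitrary: b)
  case 0 then show ?case by simp
next
  case (Suc n)
  then obtain c where c: "(a,c) \<in> R ^^ n" "(c,b) \<in> R" by (meson relpow_Suc_E)
  have "(c,b) \<in> CS" using c(2) unfolding R_def CS_def by auto
  then show ?case using Suc.IH[OF c(1)] relpow_Suc_I by metis
qed

lemma dist_le: assumes xP: "x \<in> P" and p: "(x,y) \<in> CS ^^ n"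
  shows "circuit_dist V RR fstab_B fstab_d x y \<le> enat n"
proof -
  obtain f where f: "f 0 = x" "f n = y" "\<forall>i<n. (f i, f (Suc i)) \<in> CS" using p unfolding relpow_fun_conv by blast
  have inp: "f i \<in> polyh V RR fstab_B fstab_d" if "i \<le> n" for i
  proof (cases i)
    case 0 then show ?thesis using xP f(1) unfolding P_def by simp
  next
    case (Suc j)
    then have "(f j, f (Suc j)) \<in> CS" using f(3) that by auto
    then show ?thesis using Suc unfolding CS_def circuit_step_def by auto
  qed
  have "circuit_walk V RR fstab_B fstab_d f n"
    unfolding circuit_walk_def using inp f(3) unfolding CS_def by auto
  then have "n \<in> {l. \<exists>z. circuit_walk V RR fstab_B fstab_d z l \<and> z 0 = x \<and> z l = y}" using f by auto
  then show ?thesis unfolding circuit_dist_def by (rule INF_lower)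
qed

lemma CD_bound: "circuit_diameter V RR fstab_B fstab_d \<le> enat (16 * D)"
  unfolding circuit_diameter_def
proof (rule SUP_least)
  fix p assume "p \<in> {p. is_vertex (polyh V RR fstab_B fstab_d) (fst p) \<and> is_vertex (polyh V RR fstab_B fstab_d) (snd p)}"
  then have vx: "is_vertex P (fst p)" and vy: "is_vertex P (snd p)" unfolding P_def by auto
  obtain m1 where m1: "m1 \<le> 8 * D" "(fst p, Hub) \<in> R ^^ m1" using to_hub[OF vx] unfolding wthn_def by blast
  obtain m2 where m2: "m2 \<le> 8 * D" "(snd p, Hub) \<in> R ^^ m2" using to_hub[OF vy] unfolding wthn_def by blast
  have "(fst p, snd p) \<in> R ^^ (m1 + m2)" using rp_trans[OF m1(2) R_pow_sym[OF m2(2)]] .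
  then have "(fst p, snd p) \<in> CS ^^ (m1 + m2)" by (rule R_CS)
  then have "circuit_dist V RR fstab_B fstab_d (fst p) (snd p) \<le> enat (m1 + m2)"
    using dist_le vertex_P[OF vx] by blast
  also have "\<dots> \<le> enat (16 * D)" using m1 m2 by simp
  finally show "circuit_dist V RR fstab_B fstab_d (fst p) (snd p) \<le> enat (16 * D)" .
qed

end

theorem corollary3:
  shows "\<exists>C::nat. \<forall>V E. graph V E \<and> connected_graph V E \<and> card V \<ge> 2 \<longrightarrow>
           CD_FSTAB V E \<le> enat (C * diam V E)"
proof (intro exI[of _ 16] allI impI)
  fix V E assume h: "graph V E \<and> connected_graph V E \<and> card V \<ge> 2"
  then have "V \<noteq> {}" by auto
  then obtain r where r: "r \<in> V" by auto
  interpret fg V E r using h r by unfold_locales auto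
  have "CD_FSTAB V E \<le> enat (16 * D)" unfolding CD_FSTAB_def by (rule CD_bound)
  also have "\<dots> \<le> enat (16 * diam V E)" using D_diam by simp
  finally show "CD_FSTAB V E \<le> enat (16 * diam V E)" .
qed

end
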